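(* Let $g(n,k)$ be the number of $k$-faces of $I(\mathfrak{gl}_n,V\oplus\bigwedge^2)$ for $n,k\ge0$, with $g(n,k)=0$ for $n<0$ and for $k\notin[0,n]$. Then for all $n\ge0$ and all $k$, \[ g(n,k)=\delta_{k,0}+\sum_{\ell=1}^{n-k+1}(\ell+1)\,g(n-\ell,k-1). \]
   Context: Identify the diagonal Cartan subalgebra of $\mathfrak{gl}_n$ with $\mathbb{R}^n$ with coordinates $x_1,\dots,x_n$. Let $W=\{x_1\ge\cdots\ge x_n\}$ and $W^0=\{x_1>\cdots>x_n\}$. For $1\le i\le j\le n$ let $\lambda_{i,j}^\perp$ be the hyperplane $x_i+x_j=0$ (for $i=j$: $x_i=0$); $I(\mathfrak{gl}_n,V\oplus\bigwedge^2)$ is the arrangement of these hyperplanes restricted to $W$. Chambers are the closures of the connected components of $W^0\setminus\bigcup\lambda_{i,j}^\perp$; a face is a chamber or the intersection of a chamber with a supporting hyperplane; a $k$-face is a face whose linear span has dimension $k$. $\delta$ is the Kronecker delta. *)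

theory Defs
  imports "HOL-Analysis.Analysis"
begin

text \<open>R^n is modelled as the functions x :: nat => real vanishing outside {0..<n};
  coordinate x_i of the paper (i = 1..n) is x (i - 1). The topology is the product
  topology on nat => real, which on these points is the Euclidean topology of R^n.\<close>

definition Rn :: "nat \<Rightarrow> (nat \<Rightarrow> real) set" where
  "Rn n = {x. \<forall>i\<ge>n. x i = 0}"

definition W :: "nat \<Rightarrow> (nat \<Rightarrow> real) set" where
  "W n = {x \<in> Rn n. \<forall>i j. i < j \<and> j < n \<longrightarrow> x j \<le> x i}"

definition W0 :: "nat \<Rightarrow> (nat \<Rightarrow> real) set" where
  "W0 n = {x \<in> Rn n. \<forall>i j. i < j \<and> j < n \<longrightarrow> x j < x i}"

definition lam_hyp :: "nat \<Rightarrow> nat \<Rightarrow> nat \<Rightarrow> (nat \<Rightarrow> real) set" where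
  "lam_hyp n i j = {x \<in> Rn n. if i = j then x i = 0 else x i + x j = 0}"

definition arr_union :: "nat \<Rightarrow> (nat \<Rightarrow> real) set" where
  "arr_union n = (\<Union>i\<in>{..<n}. \<Union>j\<in>{i..<n}. lam_hyp n i j)"

definition chambers :: "nat \<Rightarrow> (nat \<Rightarrow> real) set set" where
  "chambers n = {closure (connected_component_set (W0 n - arr_union n) x) | x.
                    x \<in> W0 n - arr_union n}"

definition lin_form :: "nat \<Rightarrow> (nat \<Rightarrow> real) \<Rightarrow> (nat \<Rightarrow> real) \<Rightarrow> real" where
  "lin_form n a x = (\<Sum>i<n. a i * x i)"

definition supporting :: "nat \<Rightarrow> (nat \<Rightarrow> real) \<Rightarrow> real \<Rightarrow> (nat \<Rightarrow> real) set \<Rightarrow> bool" where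
  "supporting n a b C \<longleftrightarrow> a \<in> Rn n \<and> (\<exists>i<n. a i \<noteq> 0) \<and> C \<subseteq> {x. lin_form n a x \<le> b}
      \<and> C \<inter> {x \<in> Rn n. lin_form n a x = b} \<noteq> {}"

definition faces :: "nat \<Rightarrow> (nat \<Rightarrow> real) set set" where
  "faces n = {F. \<exists>C\<in>chambers n. F = C \<or>
      (\<exists>a b. supporting n a b C \<and> F = C \<inter> {x \<in> Rn n. lin_form n a x = b})}"

definition lin_indep :: "(nat \<Rightarrow> real) set \<Rightarrow> bool" where
  "lin_indep B \<longleftrightarrow> (\<forall>c. (\<forall>i. (\<Sum>v\<in>B. c v * v i) = 0) \<longrightarrow> (\<forall>v\<in>B. c v = 0))"

definition span_dim :: "(nat \<Rightarrow> real) set \<Rightarrow> nat" where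
  "span_dim S = Max {card B | B. finite B \<and> B \<subseteq> S \<and> lin_indep B}"

definition num_kfaces :: "nat \<Rightarrow> nat \<Rightarrow> nat" where
  "num_kfaces n k = card {F \<in> faces n. span_dim F = k}"

definition g :: "int \<Rightarrow> int \<Rightarrow> int" where
  "g n k = (if n < 0 \<or> k < 0 \<or> k > n then 0 else int (num_kfaces (nat n) (nat k)))"

end

theory Submission
  imports Defs "HOL-Library.Function_Algebras"
begin


definition ray :: "nat \<Rightarrow> nat \<times> nat \<Rightarrow> nat \<Rightarrow> real" where
  "ray n e i = (if i < fst e then 1 else if n - snd e \<le> i \<and> i < n then -1 else 0)"

definition Tn :: "nat \<Rightarrow> (nat \<times> nat) set" where
  "Tn n = {e. 1 \<le> fst e + snd e \<and> fst e + snd e \<le> n}"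

definition cmb :: "nat \<Rightarrow> (nat \<times> nat) set \<Rightarrow> (nat \<times> nat \<Rightarrow> real) \<Rightarrow> nat \<Rightarrow> real" where
  "cmb n E c = (\<lambda>i. \<Sum>e\<in>E. c e * ray n e i)"

definition kone :: "nat \<Rightarrow> (nat \<times> nat) set \<Rightarrow> (nat \<Rightarrow> real) set" where
  "kone n E = {cmb n E c | c. \<forall>e\<in>E. 0 \<le> c e}"

fun ptn :: "(nat \<Rightarrow> bool) \<Rightarrow> nat \<Rightarrow> nat \<times> nat" where
  "ptn s 0 = (0,0)"
| "ptn s (Suc m) = (if s m then (Suc (fst (ptn s m)), snd (ptn s m)) else (fst (ptn s m), Suc (snd (ptn s m))))"

definition Mx :: "nat \<Rightarrow> (nat \<Rightarrow> bool) \<Rightarrow> (nat \<times> nat) set" where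
  "Mx n s = ptn s ` {1..n}"

definition ix :: "nat \<Rightarrow> (nat \<Rightarrow> bool) \<Rightarrow> nat \<Rightarrow> nat" where
  "ix n s j = (if s j then fst (ptn s j) else n - 1 - snd (ptn s j))"

definition sg :: "(nat \<Rightarrow> bool) \<Rightarrow> nat \<Rightarrow> real" where
  "sg s j = (if s j then 1 else -1)"

definition TT :: "nat \<Rightarrow> (nat \<Rightarrow> bool) \<Rightarrow> nat \<Rightarrow> (nat \<Rightarrow> real) \<Rightarrow> real" where
  "TT n s j y = (if j < n then sg s j * y (ix n s j) else 0)"

definition Oc :: "nat \<Rightarrow> (nat \<Rightarrow> bool) \<Rightarrow> (nat \<Rightarrow> real) set" where
  "Oc n s = {y \<in> Rn n. \<forall>j<n. TT n s (Suc j) y < TT n s j y}"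

lemma sum_fun_apply: "(\<Sum>x\<in>A. f x) i = (\<Sum>x\<in>A. f x i)"
  by (induction A rule: infinite_finite_induct) auto

lemma Rn_iff: "y \<in> Rn n \<longleftrightarrow> (\<forall>i\<ge>n. y i = 0)"
  by (simp add: Rn_def)

lemma ptn_sum: "fst (ptn s m) + snd (ptn s m) = m"
  by (induction m) auto

lemma ptn_mono: "m \<le> m' \<Longrightarrow> fst (ptn s m) \<le> fst (ptn s m') \<and> snd (ptn s m) \<le> snd (ptn s m')"
proof (induction m' )
  case 0 then show ?case by simp
next
  case (Suc m')
  then show ?case by (cases "m = Suc m'") (auto simp: le_Suc_eq)
qed

lemma ptn_inj: "ptn s m = ptn s m' \<Longrightarrow> m = m'"
  by (metis ptn_sum)

lemma sg_sq [simp]: "sg s j * sg s j = 1"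
  by (simp add: sg_def)

lemma ray_fst_step: "Suc p + q \<le> n \<Longrightarrow> ray n (Suc p, q) i = ray n (p,q) i + (if i = p then 1 else 0)"
  by (auto simp: ray_def)

lemma ray_snd_step: "p + Suc q \<le> n \<Longrightarrow> ray n (p, Suc q) i = ray n (p,q) i + (if i = n - Suc q then -1 else 0)"
  by (auto simp: ray_def)

lemma ray_ptn: "m \<le> n \<Longrightarrow> ray n (ptn s m) i = (\<Sum>j<m. if ix n s j = i then sg s j else 0)"
proof (induction m)
  case 0 then show ?case by (simp add: ray_def)
next
  case (Suc m)
  have h: "fst (ptn s m) + snd (ptn s m) = m" by (rule ptn_sum)
  show ?case
  proof (cases "s m")
    case True
    have "ray n (ptn s (Suc m)) i = ray n (Suc (fst (ptn s m)), snd (ptn s m)) i" using True by simp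
    also have "\<dots> = ray n (ptn s m) i + (if i = fst (ptn s m) then 1 else 0)"
      using ray_fst_step[of "fst (ptn s m)" "snd (ptn s m)" n i] Suc.prems h by simp
    finally show ?thesis using Suc True by (simp add: ix_def sg_def eq_commute)
  next
    case False
    have "ray n (ptn s (Suc m)) i = ray n (fst (ptn s m), Suc (snd (ptn s m))) i" using False by simp
    also have "\<dots> = ray n (ptn s m) i + (if i = n - Suc (snd (ptn s m)) then -1 else 0)"
      using ray_snd_step[of "fst (ptn s m)" "snd (ptn s m)" n i] Suc.prems h by simp
    finally show ?thesis using Suc False by (simp add: ix_def sg_def eq_commute)
  qed
qed

lemma ix_lt: "j < n \<Longrightarrow> ix n s j < n"
proof -
  assume "j < n"
  moreover have "fst (ptn s j) + snd (ptn s j) = j" by (rule ptn_sum)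
  ultimately show ?thesis by (auto simp: ix_def)
qed

lemma ptn_Suc_fst: "s j \<Longrightarrow> Suc j \<le> j' \<Longrightarrow> Suc (fst (ptn s j)) \<le> fst (ptn s j')"
  using ptn_mono[of "Suc j" j' s] by simp

lemma ptn_Suc_snd: "\<not> s j \<Longrightarrow> Suc j \<le> j' \<Longrightarrow> Suc (snd (ptn s j)) \<le> snd (ptn s j')"
  using ptn_mono[of "Suc j" j' s] by simp

lemma ix_inj_aux: "j < j' \<Longrightarrow> j' < n \<Longrightarrow> ix n s j \<noteq> ix n s j'"
proof -
  assume a: "j < j'" "j' < n"
  have s1: "fst (ptn s j') + snd (ptn s j') = j'" by (rule ptn_sum)
  have s0: "fst (ptn s j) + snd (ptn s j) = j" by (rule ptn_sum)
  have m: "fst (ptn s j) \<le> fst (ptn s j') \<and> snd (ptn s j) \<le> snd (ptn s j')"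
    using ptn_mono[of j j' s] a by simp
  show ?thesis
  proof (cases "s j")
    case True
    then have f: "Suc (fst (ptn s j)) \<le> fst (ptn s j')" using ptn_Suc_fst a by simp
    then show ?thesis using True a s1 by (auto simp: ix_def)
  next
    case False
    then have f: "Suc (snd (ptn s j)) \<le> snd (ptn s j')" using ptn_Suc_snd a by simp
    then show ?thesis using False a s1 by (auto simp: ix_def)
  qed
qed

lemma ix_inj: "j < n \<Longrightarrow> j' < n \<Longrightarrow> ix n s j = ix n s j' \<Longrightarrow> j = j'"
  by (metis ix_inj_aux linorder_neqE_nat)

lemma ix_image: "ix n s ` {..<n} = {..<n}"
proof -
  have inj: "inj_on (ix n s) {..<n}" using ix_inj by (auto simp: inj_on_def)
  have sub: "ix n s ` {..<n} \<subseteq> {..<n}" using ix_lt by auto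
  have "card (ix n s ` {..<n}) = card {..<n}" using card_image[OF inj] by simp
  then show ?thesis using card_subset_eq[OF _ sub] by simp
qed

lemma ix_surj: "i < n \<Longrightarrow> \<exists>j<n. ix n s j = i"
  using ix_image[of n s] by (metis imageE lessThan_iff)

lemma ray_ptn_ix: "j < n \<Longrightarrow> m \<le> n \<Longrightarrow> ray n (ptn s m) (ix n s j) = (if j < m then sg s j else 0)"
proof -
  assume a: "j < n" "m \<le> n"
  have "ray n (ptn s m) (ix n s j) = (\<Sum>j'<m. if j' = j then sg s j' else 0)"
    unfolding ray_ptn[OF a(2)]
  proof (rule sum.cong)
    fix x assume "x \<in> {..<m}"
    then have "ix n s x = ix n s j \<longleftrightarrow> x = j" using ix_inj[of x n j s] a by auto
    then show "(if ix n s x = ix n s j then sg s x else 0) = (if x = j then sg s x else 0)" by simp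
  qed simp
  then show ?thesis by simp
qed

lemma TT_ray: "j < n \<Longrightarrow> m \<le> n \<Longrightarrow> TT n s j (ray n (ptn s m)) = (if j < m then 1 else 0)"
  by (simp add: TT_def ray_ptn_ix)

lemma TT_ge: "n \<le> j \<Longrightarrow> TT n s j y = 0"
  by (simp add: TT_def)

lemma TT_cmb: "TT n s j (cmb n E c) = (\<Sum>e\<in>E. c e * TT n s j (ray n e))"
  by (simp add: TT_def cmb_def sum_distrib_left algebra_simps)

lemma ray_out: "fst e \<le> n \<Longrightarrow> n \<le> i \<Longrightarrow> ray n e i = 0"
  by (simp add: ray_def)

lemma cmb_Rn: "E \<subseteq> Tn n \<Longrightarrow> cmb n E c \<in> Rn n"
  unfolding Rn_def cmb_def
proof (intro CollectI allI impI sum.neutral ballI)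
  fix i e assume "E \<subseteq> Tn n" "n \<le> i" "e \<in> E"
  then have "fst e \<le> n" by (auto simp: Tn_def)
  then show "c e * ray n e i = 0" using \<open>n \<le> i\<close> by (simp add: ray_out)
qed

lemma Mx_Tn: "Mx n s \<subseteq> Tn n"
  by (auto simp: Mx_def Tn_def ptn_sum)

lemma finite_Tn: "finite (Tn n)"
proof -
  have "Tn n \<subseteq> {..n} \<times> {..n}" by (auto simp: Tn_def)
  then show ?thesis by (rule finite_subset) auto
qed

lemma inj_ptn: "inj_on (ptn s) A"
  by (auto simp: inj_on_def intro: ptn_inj)

lemma card_Mx: "card (Mx n s) = n"
  by (simp add: Mx_def card_image[OF inj_ptn])

lemma finite_Mx: "finite (Mx n s)"
  by (simp add: Mx_def)

lemma cmb_ptn: "cmb n (ptn s ` J) c = (\<lambda>i. \<Sum>m\<in>J. c (ptn s m) * ray n (ptn s m) i)"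
  by (simp add: cmb_def sum.reindex[OF inj_ptn])

definition AA :: "(nat \<times> nat \<Rightarrow> real) \<Rightarrow> (nat \<Rightarrow> bool) \<Rightarrow> nat set \<Rightarrow> nat \<Rightarrow> real" where
  "AA c s J j = (\<Sum>m\<in>{m\<in>J. j < m}. c (ptn s m))"

lemma TT_cmb_ptn:
  assumes "J \<subseteq> {1..n}" "j \<le> n"
  shows "TT n s j (cmb n (ptn s ` J) c) = AA c s J j"
proof (cases "j < n")
  case True
  have "TT n s j (cmb n (ptn s ` J) c) = (\<Sum>m\<in>J. c (ptn s m) * TT n s j (ray n (ptn s m)))"
    by (simp add: TT_cmb sum.reindex[OF inj_ptn])
  also have "\<dots> = (\<Sum>m\<in>J. if j < m then c (ptn s m) else 0)"
    by (rule sum.cong) (use assms True in \<open>auto simp: TT_ray\<close>)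
  also have "\<dots> = AA c s J j"
    unfolding AA_def using assms finite_subset[OF assms(1)] by (simp add: sum.inter_filter)
  finally show ?thesis .
next
  case False
  then have "j = n" using assms by simp
  moreover have emp: "{m\<in>J. n < m} = {}" using assms by auto
  ultimately show ?thesis unfolding AA_def by (simp only: emp TT_ge order.refl sum.empty)
qed

lemma AA_step:
  assumes "J \<subseteq> {1..n}" "j < n"
  shows "AA c s J j = AA c s J (Suc j) + (if Suc j \<in> J then c (ptn s (Suc j)) else 0)"
proof -
  have fin: "finite J" using assms finite_subset by blast
  have "{m\<in>J. j < m} = {m\<in>J. Suc j < m} \<union> (if Suc j \<in> J then {Suc j} else {})"
    by (auto, metis Suc_lessI)
  then show ?thesis unfolding AA_def using fin
    by (auto simp: sum.union_disjoint)
qed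

lemma telescope_aux: fixes j n :: nat shows "j \<le> n \<Longrightarrow> (\<Sum>m\<in>{m\<in>{1..n}. j < m}. f (m - 1) - f m) = f j - (f n :: real)"
proof (induction n)
  case 0 then show ?case by simp
next
  case (Suc n)
  show ?case
  proof (cases "j = Suc n")
    case True
    then have e: "{m\<in>{1..Suc n}. j < m} = {}" by auto
    show ?thesis unfolding e using True by simp
  next
    case False
    then have jn: "j \<le> n" using Suc.prems by simp
    have "{m\<in>{1..Suc n}. j < m} = insert (Suc n) {m\<in>{1..n}. j < m}" using jn by auto
    then show ?thesis using Suc.IH[OF jn] by simp
  qed
qed

lemma decomp_Mx:
  assumes "y \<in> Rn n"
  shows "y = cmb n (Mx n s) (\<lambda>e. TT n s (fst e + snd e - 1) y - TT n s (fst e + snd e) y)"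
proof
  fix i
  let ?c = "\<lambda>e. TT n s (fst e + snd e - 1) y - TT n s (fst e + snd e) y"
  have eq: "cmb n (Mx n s) ?c i = (\<Sum>m\<in>{1..n}. (TT n s (m - 1) y - TT n s m y) * ray n (ptn s m) i)"
    by (simp add: Mx_def cmb_ptn ptn_sum)
  show "y i = cmb n (Mx n s) ?c i"
  proof (cases "i < n")
    case False
    then have "y i = 0" using assms by (simp add: Rn_def)
    moreover have "ray n (ptn s m) i = 0" if "m \<in> {1..n}" for m
      using that False ptn_sum[of s m] by (intro ray_out; auto)
    ultimately show ?thesis using eq by simp
  next
    case True
    obtain j where j: "j < n" "ix n s j = i" using ix_surj[OF True] by blast
    have "cmb n (Mx n s) ?c i = (\<Sum>m\<in>{1..n}. (TT n s (m - 1) y - TT n s m y) * (if j < m then sg s j else 0))"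
      unfolding eq using j by (intro sum.cong) (auto simp: ray_ptn_ix[symmetric])
    also have "\<dots> = sg s j * (\<Sum>m\<in>{m\<in>{1..n}. j < m}. TT n s (m - 1) y - TT n s m y)"
      by (simp add: sum.inter_filter[symmetric] sum_distrib_left mult.commute if_distrib cong: if_cong)
    also have "\<dots> = sg s j * TT n s j y"
      using telescope_aux[of j n "\<lambda>m. TT n s m y"] j by (simp add: TT_ge)
    also have "\<dots> = y i" using j by (simp add: TT_def mult.assoc[symmetric])
    finally show ?thesis by simp
  qed
qed



lemma y_ix: "j < n \<Longrightarrow> y (ix n s j) = sg s j * TT n s j y"
  by (simp add: TT_def mult.assoc[symmetric])

lemma TT_step_cmb:
  assumes "y = cmb n (Mx n s) c" "j < n"
  shows "TT n s j y = TT n s (Suc j) y + c (ptn s (Suc j))"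
proof -
  have J: "{1..n} \<subseteq> {1..n}" by simp
  have "TT n s j y = AA c s {1..n} j" using TT_cmb_ptn[OF J, of j s c] assms by (simp add: Mx_def)
  also have "\<dots> = AA c s {1..n} (Suc j) + c (ptn s (Suc j))" using AA_step[OF J assms(2)] assms by simp
  also have "AA c s {1..n} (Suc j) = TT n s (Suc j) y"
    using TT_cmb_ptn[OF J, of "Suc j" s c] assms by (simp add: Mx_def)
  finally show ?thesis .
qed

lemma ptn_Mx: "e \<in> Mx n s \<Longrightarrow> \<exists>m. m \<in> {1..n} \<and> e = ptn s m"
  by (auto simp: Mx_def)

lemma kone_Mx: "kone n (Mx n s) = {y \<in> Rn n. \<forall>j<n. TT n s (Suc j) y \<le> TT n s j y}"
proof (intro set_eqI iffI)
  fix y assume "y \<in> kone n (Mx n s)"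
  then obtain c where c: "y = cmb n (Mx n s) c" "\<forall>e\<in>Mx n s. 0 \<le> c e" by (auto simp: kone_def)
  have "y \<in> Rn n" using c cmb_Rn[OF Mx_Tn] by simp
  moreover have "TT n s (Suc j) y \<le> TT n s j y" if "j < n" for j
  proof -
    have "Suc j \<in> {1..n}" using that by simp
    then have "ptn s (Suc j) \<in> Mx n s" unfolding Mx_def by (rule imageI)
    then show ?thesis using TT_step_cmb[OF c(1) that] c(2) by simp
  qed
  ultimately show "y \<in> {y \<in> Rn n. \<forall>j<n. TT n s (Suc j) y \<le> TT n s j y}" by simp
next
  fix y assume y: "y \<in> {y \<in> Rn n. \<forall>j<n. TT n s (Suc j) y \<le> TT n s j y}"
  let ?c = "\<lambda>e. TT n s (fst e + snd e - 1) y - TT n s (fst e + snd e) y"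
  have "y = cmb n (Mx n s) ?c" using decomp_Mx y by simp
  moreover have "0 \<le> ?c e" if e: "e \<in> Mx n s" for e
  proof -
    obtain m where m: "m \<in> {1..n}" "e = ptn s m" using ptn_Mx[OF e] by blast
    then have "fst e + snd e = m" by (simp add: ptn_sum)
    moreover have "m - 1 < n" using m by auto
    then have "TT n s (Suc (m - 1)) y \<le> TT n s (m - 1) y" using y by blast
    ultimately show ?thesis using m by simp
  qed
  ultimately show "y \<in> kone n (Mx n s)" unfolding kone_def by blast
qed

lemma Oc_Mx: "Oc n s = {cmb n (Mx n s) c | c. \<forall>e\<in>Mx n s. 0 < c e}"
proof (intro set_eqI iffI)
  fix y assume y: "y \<in> Oc n s"
  let ?c = "\<lambda>e. TT n s (fst e + snd e - 1) y - TT n s (fst e + snd e) y"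
  have "y = cmb n (Mx n s) ?c" using decomp_Mx y by (simp add: Oc_def)
  moreover have "0 < ?c e" if e: "e \<in> Mx n s" for e
  proof -
    obtain m where m: "m \<in> {1..n}" "e = ptn s m" using ptn_Mx[OF e] by blast
    then have "fst e + snd e = m" by (simp add: ptn_sum)
    moreover have "m - 1 < n" using m by auto
    then have "TT n s (Suc (m - 1)) y < TT n s (m - 1) y" using y by (auto simp: Oc_def)
    ultimately show ?thesis using m by simp
  qed
  ultimately show "y \<in> {cmb n (Mx n s) c | c. \<forall>e\<in>Mx n s. 0 < c e}" by blast
next
  fix y assume "y \<in> {cmb n (Mx n s) c | c. \<forall>e\<in>Mx n s. 0 < c e}"
  then obtain c where c: "y = cmb n (Mx n s) c" "\<forall>e\<in>Mx n s. 0 < c e" by auto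
  have "y \<in> Rn n" using c cmb_Rn[OF Mx_Tn] by simp
  moreover have "TT n s (Suc j) y < TT n s j y" if "j < n" for j
  proof -
    have "Suc j \<in> {1..n}" using that by simp
    then have "ptn s (Suc j) \<in> Mx n s" unfolding Mx_def by (rule imageI)
    then show ?thesis using TT_step_cmb[OF c(1) that] c(2) by simp
  qed
  ultimately show "y \<in> Oc n s" by (simp add: Oc_def)
qed

lemma Oc_strict:
  assumes y: "y \<in> Oc n s" and "j < j'" "j' \<le> n"
  shows "TT n s j' y < TT n s j y"
  using assms(2,3)
proof (induction j' rule: less_induct)
  case (less j')
  then obtain k where k: "j' = Suc k" by (cases j') auto
  have st: "TT n s (Suc k) y < TT n s k y" using y less.prems k by (auto simp: Oc_def)
  show ?case
  proof (cases "j = k")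
    case True then show ?thesis using st k by simp
  next
    case False
    then have "TT n s k y < TT n s j y" using less.IH[of k] less.prems k by simp
    then show ?thesis using st k by simp
  qed
qed

lemma Oc_pos: "y \<in> Oc n s \<Longrightarrow> j < n \<Longrightarrow> 0 < TT n s j y"
  using Oc_strict[of y n s j n] by (simp add: TT_ge)

lemma abs_y_ix: "y \<in> Oc n s \<Longrightarrow> j < n \<Longrightarrow> \<bar>y (ix n s j)\<bar> = TT n s j y"
  using Oc_pos[of y n s j] by (simp add: y_ix abs_mult sg_def)

lemma TT_inj_Oc:
  assumes "y \<in> Oc n s" "j < n" "j' < n" "TT n s j y = TT n s j' y"
  shows "j = j'"
proof (rule ccontr)
  assume "j \<noteq> j'"
  then consider "j < j'" | "j' < j" by linarith
  then show False
    using Oc_strict[OF assms(1), of j j'] Oc_strict[OF assms(1), of j' j] assms by (cases; simp)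
qed

lemma Oc_sub_O: "y \<in> Oc n s \<Longrightarrow> y \<in> W0 n - arr_union n"
proof -
  assume y: "y \<in> Oc n s"
  have Rn: "y \<in> Rn n" using y by (simp add: Oc_def)
  have dec: "y k < y i" if ik: "i < k" "k < n" for i k
  proof -
    obtain j where j: "j < n" "ix n s j = i" using ix_surj[of i n s] ik by auto
    obtain j' where j': "j' < n" "ix n s j' = k" using ix_surj[of k n s] ik by auto
    have pj: "fst (ptn s j) + snd (ptn s j) = j" "fst (ptn s j') + snd (ptn s j') = j'"
      "fst (ptn s n) + snd (ptn s n) = n" by (rule ptn_sum)+
    have yi: "y i = sg s j * TT n s j y" using y_ix j by metis
    have yk: "y k = sg s j' * TT n s j' y" using y_ix j' by metis
    have pos: "0 < TT n s j y" "0 < TT n s j' y" using Oc_pos y j j' by auto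
    show ?thesis
    proof (cases "s j")
      case sj: True
      show ?thesis
      proof (cases "s j'")
        case sj': True
        have "j < j'"
        proof (rule ccontr)
          assume "\<not> j < j'"
          then have "fst (ptn s j') \<le> fst (ptn s j)" using ptn_mono[of j' j s] by simp
          then show False using ik j j' sj sj' by (simp add: ix_def)
        qed
        then have "TT n s j' y < TT n s j y" using Oc_strict[OF y] j' by simp
        then show ?thesis using yi yk sj sj' by (simp add: sg_def)
      next
        case sj': False
        then show ?thesis using yi yk sj pos by (simp add: sg_def)
      qed
    next
      case sj: False
      show ?thesis
      proof (cases "s j'")
        case sj': True
        have a1: "Suc (snd (ptn s j)) \<le> snd (ptn s n)" using ptn_Suc_snd[of s j n] j sj by simp
        have a2: "Suc (fst (ptn s j')) \<le> fst (ptn s n)" using ptn_Suc_fst[of s j' n] j' sj' by simp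
        have "i = n - 1 - snd (ptn s j)" using j sj by (simp add: ix_def)
        moreover have "k = fst (ptn s j')" using j' sj' by (simp add: ix_def)
        ultimately have False using ik a1 a2 pj by linarith
        then show ?thesis ..
      next
        case sj': False
        have si: "i = n - 1 - snd (ptn s j)" using j sj by (simp add: ix_def)
        have sk: "k = n - 1 - snd (ptn s j')" using j' sj' by (simp add: ix_def)
        have "j' < j"
        proof (rule ccontr)
          assume "\<not> j' < j"
          then have "snd (ptn s j) \<le> snd (ptn s j')" using ptn_mono[of j j' s] by simp
          then show False using ik si sk by linarith
        qed
        then have "TT n s j y < TT n s j' y" using Oc_strict[OF y] j by simp
        then show ?thesis using yi yk sj sj' by (simp add: sg_def)
      qed
    qed
  qed
  have absinj: "\<bar>y i\<bar> = \<bar>y k\<bar> \<Longrightarrow> i < n \<Longrightarrow> k < n \<Longrightarrow> i = k" for i k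
  proof -
    assume a: "\<bar>y i\<bar> = \<bar>y k\<bar>" "i < n" "k < n"
    obtain j where j: "j < n" "ix n s j = i" using ix_surj[of i n s] a by auto
    obtain j' where j': "j' < n" "ix n s j' = k" using ix_surj[of k n s] a by auto
    have "TT n s j y = TT n s j' y" using abs_y_ix[OF y j(1)] abs_y_ix[OF y j'(1)] a j j' by simp
    then have "j = j'" using TT_inj_Oc[OF y j(1) j'(1)] by simp
    then show "i = k" using j j' by simp
  qed
  have nz: "y i \<noteq> 0" if i: "i < n" for i
  proof -
    obtain j where j: "j < n" "ix n s j = i" using ix_surj[of i n s] i by auto
    show ?thesis using abs_y_ix[OF y j(1)] Oc_pos[OF y j(1)] j by auto
  qed
  have "y \<in> W0 n" using Rn dec by (auto simp: W0_def)
  moreover have "y \<notin> arr_union n"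
  proof
    assume "y \<in> arr_union n"
    then obtain i j where ij: "i < n" "i \<le> j" "j < n" "y \<in> lam_hyp n i j"
      by (auto simp: arr_union_def)
    show False
    proof (cases "i = j")
      case True then show False using ij nz by (simp add: lam_hyp_def)
    next
      case False
      then have "y i + y j = 0" using ij by (simp add: lam_hyp_def)
      then have "\<bar>y i\<bar> = \<bar>y j\<bar>" by linarith
      then show False using absinj[of i j] ij False by simp
    qed
  qed
  ultimately show ?thesis by simp
qed



definition le2 :: "nat \<times> nat \<Rightarrow> nat \<times> nat \<Rightarrow> bool" where
  "le2 e e' \<longleftrightarrow> fst e \<le> fst e' \<and> snd e \<le> snd e'"

definition chn :: "nat \<Rightarrow> (nat \<times> nat) set \<Rightarrow> bool" where
  "chn n E \<longleftrightarrow> E \<subseteq> Tn n \<and> (\<forall>e\<in>E. \<forall>e'\<in>E. le2 e e' \<or> le2 e' e)"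

lemma chn_finite: "chn n E \<Longrightarrow> finite E"
  unfolding chn_def using finite_Tn finite_subset by blast

lemma chn_subset: "chn n E \<Longrightarrow> E' \<subseteq> E \<Longrightarrow> chn n E'"
  unfolding chn_def by blast

lemma chn_top:
  assumes "chn n E" "E \<noteq> {}"
  shows "\<exists>t\<in>E. \<forall>e\<in>E. le2 e t"
proof -
  have fin: "finite E" using chn_finite assms by blast
  let ?m = "Max ((\<lambda>e. fst e + snd e) ` E)"
  have "?m \<in> (\<lambda>e. fst e + snd e) ` E" using fin assms by (intro Max_in) auto
  then obtain t where t: "t \<in> E" "fst t + snd t = ?m" by auto
  have "le2 e t" if e: "e \<in> E" for e
  proof -
    have "fst e + snd e \<le> ?m" using fin e by (intro Max_ge) auto
    moreover have "le2 e t \<or> le2 t e" using assms(1) e t(1) by (auto simp: chn_def)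
    ultimately show ?thesis using t by (auto simp: le2_def)
  qed
  then show ?thesis using t by blast
qed

lemma cmb_remove:
  assumes "finite E" "t \<in> E"
  shows "cmb n E c i = c t * ray n t i + cmb n (E - {t}) c i"
  unfolding cmb_def using sum.remove[OF assms] by simp

lemma cmb_upd_out: "t \<notin> E \<Longrightarrow> cmb n E (c(t := d)) = cmb n E c"
  unfolding cmb_def by (intro ext sum.cong) auto

lemma sign_lemma:
  assumes ch: "chn n E" and pos: "\<forall>e\<in>E. 0 < c e" and t: "t \<in> E" "\<forall>e\<in>E. le2 e t" and i: "i < n"
  shows "(0 < cmb n E c i \<longleftrightarrow> i < fst t) \<and> (cmb n E c i < 0 \<longleftrightarrow> n - snd t \<le> i)"
proof -
  have fin: "finite E" using chn_finite ch by blast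
  have tT: "fst t + snd t \<le> n" using ch t(1) by (auto simp: chn_def Tn_def)
  have rem: "cmb n E c i = c t * ray n t i + cmb n (E - {t}) c i" using cmb_remove[OF fin t(1)] .
  have eT: "fst e \<le> fst t \<and> snd e \<le> snd t" if "e \<in> E" for e using t(2) that by (auto simp: le2_def)
  consider (a) "i < fst t" | (b) "n - snd t \<le> i" | (c) "fst t \<le> i" "i < n - snd t" by linarith
  then show ?thesis
  proof cases
    case a
    have "0 \<le> c e * ray n e i" if "e \<in> E - {t}" for e
      using eT[of e] that pos tT a i by (auto simp: ray_def)
    then have "0 \<le> cmb n (E - {t}) c i" unfolding cmb_def by (intro sum_nonneg) auto
    moreover have "c t * ray n t i = c t" using a by (simp add: ray_def)
    moreover have "0 < c t" using pos t(1) by blast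
    ultimately have "0 < cmb n E c i" using rem by linarith
    then show ?thesis using a tT by auto
  next
    case b
    have "c e * ray n e i \<le> 0" if "e \<in> E - {t}" for e
      using eT[of e] that pos tT b i by (auto simp: ray_def mult_le_0_iff)
    then have "cmb n (E - {t}) c i \<le> 0" unfolding cmb_def by (intro sum_nonpos) auto
    moreover have "c t * ray n t i = - c t" using b i tT by (simp add: ray_def)
    moreover have "0 < c t" using pos t(1) by blast
    ultimately have "cmb n E c i < 0" using rem by linarith
    then show ?thesis using b tT by auto
  next
    case c
    have "ray n e i = 0" if "e \<in> E" for e
      using eT[of e] that tT c i by (auto simp: ray_def)
    then have "cmb n E c i = 0" unfolding cmb_def by simp
    then show ?thesis using c by auto
  qed
qed

lemma cmb_nonzero:
  assumes ch: "chn n E" and pos: "\<forall>e\<in>E. 0 < c e" and ne: "E \<noteq> {}"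
  shows "cmb n E c \<noteq> (\<lambda>i. 0)"
proof -
  obtain t where t: "t \<in> E" "\<forall>e\<in>E. le2 e t" using chn_top[OF ch ne] by blast
  have tT: "1 \<le> fst t + snd t" "fst t + snd t \<le> n" using ch t(1) by (auto simp: chn_def Tn_def)
  show ?thesis
  proof (cases "0 < fst t")
    case True
    then have "0 < cmb n E c 0" using sign_lemma[OF ch pos t, of 0] tT by auto
    then show ?thesis by (metis less_irrefl)
  next
    case False
    then have "cmb n E c (n - 1) < 0" using sign_lemma[OF ch pos t, of "n - 1"] tT by auto
    then show ?thesis by (metis less_irrefl)
  qed
qed

lemma top_eq:
  assumes ch: "chn n E" and pos: "\<forall>e\<in>E. 0 < c e" and t: "t \<in> E" "\<forall>e\<in>E. le2 e t"
    and ch': "chn n E'" and pos': "\<forall>e\<in>E'. 0 < c' e" and t': "t' \<in> E'" "\<forall>e\<in>E'. le2 e t'"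
    and eq: "cmb n E c = cmb n E' c'"
  shows "t = t'"
proof -
  have tT: "fst t + snd t \<le> n" "1 \<le> fst t + snd t" using ch t(1) by (auto simp: chn_def Tn_def)
  have tT': "fst t' + snd t' \<le> n" "1 \<le> fst t' + snd t'" using ch' t'(1) by (auto simp: chn_def Tn_def)
  have S: "\<And>i. i < n \<Longrightarrow> (i < fst t \<longleftrightarrow> i < fst t') \<and> (n - snd t \<le> i \<longleftrightarrow> n - snd t' \<le> i)"
    using sign_lemma[OF ch pos t] sign_lemma[OF ch' pos' t'] eq by metis
  have "fst t = fst t'"
  proof (rule ccontr)
    assume "fst t \<noteq> fst t'"
    then consider "fst t < fst t'" | "fst t' < fst t" by linarith
    then show False
    proof cases
      case 1 then show False using S[of "fst t"] tT' by auto
    next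
      case 2 then show False using S[of "fst t'"] tT by auto
    qed
  qed
  moreover have "snd t = snd t'"
  proof (rule ccontr)
    assume "snd t \<noteq> snd t'"
    then consider "snd t < snd t'" | "snd t' < snd t" by linarith
    then show False
    proof cases
      case 1 then show False using S[of "n - snd t'"] tT' by auto
    next
      case 2 then show False using S[of "n - snd t"] tT by auto
    qed
  qed
  ultimately show ?thesis by (simp add: prod_eq_iff)
qed

lemma U_unique:
  assumes "chn n E" "chn n E'" "\<forall>e\<in>E. 0 < c e" "\<forall>e\<in>E'. 0 < c' e" "cmb n E c = cmb n E' c'"
  shows "E = E'"
  using assms
proof (induction "card E + card E'" arbitrary: E E' c c' rule: less_induct)
  case less
  note ch = less.prems(1) and ch' = less.prems(2) and pos = less.prems(3) and pos' = less.prems(4)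
    and eq = less.prems(5)
  have fin: "finite E" "finite E'" using chn_finite ch ch' by auto
  show ?case
  proof (cases "E = {}")
    case True
    then have "cmb n E c = (\<lambda>i. 0)" by (simp add: cmb_def)
    then show ?thesis using cmb_nonzero[OF ch' pos'] eq True by auto
  next
    case ne: False
    show ?thesis
    proof (cases "E' = {}")
      case True
      then have "cmb n E' c' = (\<lambda>i. 0)" by (simp add: cmb_def)
      then show ?thesis using cmb_nonzero[OF ch pos ne] eq by auto
    next
      case ne': False
      obtain t where t: "t \<in> E" "\<forall>e\<in>E. le2 e t" using chn_top[OF ch ne] by blast
      obtain t' where t': "t' \<in> E'" "\<forall>e\<in>E'. le2 e t'" using chn_top[OF ch' ne'] by blast
      have tt: "t = t'" using top_eq[OF ch pos t ch' pos' t' eq] .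
      have rE: "\<And>i. cmb n E c i = c t * ray n t i + cmb n (E - {t}) c i" using cmb_remove[OF fin(1) t(1)] .
      have rE': "\<And>i. cmb n E' c' i = c' t * ray n t i + cmb n (E' - {t}) c' i"
        using cmb_remove[OF fin(2) t'(1)] tt by simp
      have chr: "chn n (E - {t})" "chn n (E' - {t})" using chn_subset ch ch' by auto
      have cardr: "card (E - {t}) < card E" "card (E' - {t}) < card E'"
        using card_Diff1_less[OF fin(1) t(1)] card_Diff1_less[OF fin(2) t'(1)] tt by auto
      have pr: "\<forall>e\<in>E - {t}. 0 < c e" "\<forall>e\<in>E' - {t}. 0 < c' e" using pos pos' by auto
      have base: "c t * ray n t i + cmb n (E - {t}) c i = c' t * ray n t i + cmb n (E' - {t}) c' i" for i
        using rE[of i] rE'[of i] eq by metis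
      consider "c t = c' t" | "c t < c' t" | "c' t < c t" by linarith
      then show ?thesis
      proof cases
        case 1
        have e2: "cmb n (E - {t}) c = cmb n (E' - {t}) c'"
        proof
          fix i show "cmb n (E - {t}) c i = cmb n (E' - {t}) c' i"
            using base[of i] 1 by simp
        qed
        have "card (E - {t}) + card (E' - {t}) < card E + card E'" using cardr by simp
        from less.hyps[OF this chr(1) chr(2) pr e2]
        have "E - {t} = E' - {t}" .
        then show ?thesis using t(1) t'(1) tt by blast
      next
        case 2
        let ?d = "c' t - c t"
        have e2: "cmb n (E - {t}) c = cmb n E' (c'(t := ?d))"
        proof
          fix i
          have "cmb n E' (c'(t := ?d)) i = ?d * ray n t i + cmb n (E' - {t}) (c'(t := ?d)) i"
            using cmb_remove[OF fin(2) t'(1), of n "c'(t := ?d)" i] tt by simp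
          also have "cmb n (E' - {t}) (c'(t := ?d)) = cmb n (E' - {t}) c'" by (simp add: cmb_upd_out)
          finally have "cmb n E' (c'(t := ?d)) i = ?d * ray n t i + cmb n (E' - {t}) c' i" .
          then show "cmb n (E - {t}) c i = cmb n E' (c'(t := ?d)) i"
            using base[of i] by (simp add: algebra_simps)
        qed
        have p2: "\<forall>e\<in>E'. 0 < (c'(t := ?d)) e" using pos' 2 by auto
        have "card (E - {t}) + card E' < card E + card E'" using cardr by simp
        from less.hyps[OF this chr(1) ch' pr(1) p2 e2]
        have "E - {t} = E'" .
        then show ?thesis using t'(1) tt by blast
      next
        case 3
        let ?d = "c t - c' t"
        have e2: "cmb n E (c(t := ?d)) = cmb n (E' - {t}) c'"
        proof
          fix i
          have "cmb n E (c(t := ?d)) i = ?d * ray n t i + cmb n (E - {t}) (c(t := ?d)) i"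
            using cmb_remove[OF fin(1) t(1), of n "c(t := ?d)" i] by simp
          also have "cmb n (E - {t}) (c(t := ?d)) = cmb n (E - {t}) c" by (simp add: cmb_upd_out)
          finally have "cmb n E (c(t := ?d)) i = ?d * ray n t i + cmb n (E - {t}) c i" .
          then show "cmb n E (c(t := ?d)) i = cmb n (E' - {t}) c' i"
            using base[of i] by (simp add: algebra_simps)
        qed
        have p2: "\<forall>e\<in>E. 0 < (c(t := ?d)) e" using pos 3 by auto
        have "card E + card (E' - {t}) < card E + card E'" using cardr by simp
        from less.hyps[OF this ch chr(2) p2 pr(2) e2]
        have "E = E' - {t}" .
        then show ?thesis using t(1) by blast
      qed
    qed
  qed
qed



definition npos :: "nat \<Rightarrow> (nat \<Rightarrow> real) \<Rightarrow> nat" where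
  "npos n x = card {i. i < n \<and> 0 < x i}"
definition nneg :: "nat \<Rightarrow> (nat \<Rightarrow> real) \<Rightarrow> nat" where
  "nneg n x = card {i. i < n \<and> x i < 0}"
definition nzc :: "nat \<Rightarrow> (nat \<Rightarrow> real) \<Rightarrow> nat" where
  "nzc n x = card {i. i < n \<and> x i \<noteq> 0}"
definition injabs :: "nat \<Rightarrow> (nat \<Rightarrow> real) \<Rightarrow> bool" where
  "injabs n x \<longleftrightarrow> (\<forall>i<n. \<forall>j<n. x i \<noteq> 0 \<longrightarrow> \<bar>x i\<bar> = \<bar>x j\<bar> \<longrightarrow> i = j)"

lemma down_closed:
  assumes "S \<subseteq> {..<n}" "\<And>i j. i \<le> j \<Longrightarrow> j \<in> S \<Longrightarrow> i \<in> S"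
  shows "S = {..<card S}"
proof (cases "S = {}")
  case True then show ?thesis by simp
next
  case False
  have fin: "finite S" using assms(1) finite_subset by blast
  have "S = {..<Suc (Max S)}"
  proof
    show "S \<subseteq> {..<Suc (Max S)}" using fin by (auto simp: less_Suc_eq_le)
    show "{..<Suc (Max S)} \<subseteq> S"
    proof
      fix i assume "i \<in> {..<Suc (Max S)}"
      then have "i \<le> Max S" by simp
      moreover have "Max S \<in> S" using fin False by simp
      ultimately show "i \<in> S" using assms(2) by blast
    qed
  qed
  then show ?thesis by (metis card_lessThan)
qed

lemma up_closed:
  assumes "S \<subseteq> {..<n}" "\<And>i j. i \<le> j \<Longrightarrow> j < n \<Longrightarrow> i \<in> S \<Longrightarrow> j \<in> S"
  shows "S = {n - card S..<n}"
proof (cases "S = {}")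
  case True then show ?thesis by simp
next
  case False
  have fin: "finite S" using assms(1) finite_subset by blast
  have mS: "Min S \<in> S" using fin False by simp
  have "S = {Min S..<n}"
  proof
    show "S \<subseteq> {Min S..<n}" using fin assms(1) by auto
    show "{Min S..<n} \<subseteq> S"
    proof
      fix i assume "i \<in> {Min S..<n}"
      then show "i \<in> S" using assms(2)[of "Min S" i] mS by auto
    qed
  qed
  moreover have "Min S < n" using mS assms(1) by auto
  ultimately have "card S = n - Min S" by (metis card_atLeastLessThan)
  then have "Min S = n - card S" using \<open>Min S < n\<close> by simp
  then show ?thesis using \<open>S = {Min S..<n}\<close> by simp
qed

lemma W_dec: "x \<in> W n \<Longrightarrow> i \<le> j \<Longrightarrow> j < n \<Longrightarrow> x j \<le> x i"
  by (cases "i = j") (auto simp: W_def)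

lemma W_Rn: "x \<in> W n \<Longrightarrow> x \<in> Rn n"
  by (simp add: W_def)

lemma pos_set: "x \<in> W n \<Longrightarrow> {i. i < n \<and> 0 < x i} = {..<npos n x}"
  unfolding npos_def
  by (rule down_closed[of _ n]) (auto dest: W_dec[of x n] intro: order.strict_trans2)

lemma neg_set:
  assumes xW: "x \<in> W n"
  shows "{i. i < n \<and> x i < 0} = {n - nneg n x..<n}"
proof -
  let ?S = "{i. i < n \<and> x i < 0}"
  have sub: "?S \<subseteq> {..<n}" by auto
  have up: "j \<in> ?S" if a: "i \<le> j" "j < n" "i \<in> ?S" for i j
  proof -
    have "x j \<le> x i" using W_dec[OF xW a(1,2)] .
    moreover have "x i < 0" using a(3) by simp
    ultimately show ?thesis using a(2) by simp
  qed
  have eq: "?S = {n - card ?S..<n}" by (rule up_closed[OF sub up])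
  show ?thesis unfolding nneg_def by (rule eq)
qed

lemma pos_iff: "x \<in> W n \<Longrightarrow> i < n \<Longrightarrow> (0 < x i \<longleftrightarrow> i < npos n x)"
  using pos_set[of x n] by (metis (mono_tags, lifting) lessThan_iff mem_Collect_eq)

lemma neg_iff:
  assumes "x \<in> W n" "i < n"
  shows "x i < 0 \<longleftrightarrow> n - nneg n x \<le> i"
proof -
  have e: "{i. i < n \<and> x i < 0} = {n - nneg n x..<n}" by (rule neg_set[OF assms(1)])
  have "(x i < 0) = (i \<in> {i. i < n \<and> x i < 0})" using assms(2) by simp
  also have "\<dots> = (i \<in> {n - nneg n x..<n})" by (simp only: e)
  finally show ?thesis using assms(2) by simp
qed

lemma nz_split: "nzc n x = npos n x + nneg n x"
proof -
  have "{i. i < n \<and> x i \<noteq> 0} = {i. i < n \<and> 0 < x i} \<union> {i. i < n \<and> x i < 0}" by auto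
  moreover have "{i. i < n \<and> 0 < x i} \<inter> {i. i < n \<and> x i < 0} = {}" by auto
  ultimately show ?thesis unfolding nzc_def npos_def nneg_def by (simp add: card_Un_disjoint)
qed

lemma nzc_le: "nzc n x \<le> n"
proof -
  have "{i. i < n \<and> x i \<noteq> 0} \<subseteq> {..<n}" by auto
  then show ?thesis unfolding nzc_def by (metis card_lessThan card_mono finite_lessThan)
qed

lemma ray_W:
  assumes "x \<in> W n"
  shows "ray n (npos n x, nneg n x) i = (if 0 < x i then 1 else if x i < 0 then -1 else 0)"
proof (cases "i < n")
  case True
  have "npos n x + nneg n x \<le> n" using nz_split[of n x] nzc_le[of n x] by simp
  then show ?thesis using pos_iff[OF assms True] neg_iff[OF assms True] True
    by (auto simp: ray_def)
next
  case False
  then have "x i = 0" using W_Rn[OF assms] by (simp add: Rn_def)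
  moreover have "npos n x \<le> n" using nz_split[of n x] nzc_le[of n x] by simp
  ultimately show ?thesis using False by (auto simp: ray_def)
qed

lemma peel:
  assumes "x \<in> W n"
  shows "\<exists>E c. chn n E \<and> (\<forall>e\<in>E. 0 < c e) \<and> x = cmb n E c \<and> (\<forall>e\<in>E. le2 e (npos n x, nneg n x))
           \<and> (injabs n x \<longrightarrow> card E = nzc n x)"
  using assms
proof (induction "nzc n x" arbitrary: x rule: less_induct)
  case less
  have xW: "x \<in> W n" by fact
  have xR: "x \<in> Rn n" using W_Rn[OF xW] .
  show ?case
  proof (cases "nzc n x = 0")
    case True
    have "x = (\<lambda>i. 0)"
    proof
      fix i
      show "x i = 0"
      proof (cases "i < n")
        case True
        have "finite {i. i < n \<and> x i \<noteq> 0}" by simp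
        then have "{i. i < n \<and> x i \<noteq> 0} = {}" using \<open>nzc n x = 0\<close> by (simp add: nzc_def)
        then show ?thesis using True by auto
      next
        case False then show ?thesis using xR by (simp add: Rn_def)
      qed
    qed
    then have "x = cmb n {} (\<lambda>_. 1)" by (simp add: cmb_def)
    moreover have "chn n {}" by (simp add: chn_def)
    ultimately show ?thesis using True by (intro exI[of _ "{}"] exI[of _ "\<lambda>_. 1"]) simp
  next
    case nz: False
    define p where "p = npos n x"
    define q where "q = nneg n x"
    have pq: "nzc n x = p + q" using nz_split p_def q_def by simp
    have pqn: "p + q \<le> n" using pq nzc_le[of n x] by simp
    define Z where "Z = (\<lambda>i. \<bar>x i\<bar>) ` {i. i < n \<and> x i \<noteq> 0}"
    have Zfin: "finite Z" unfolding Z_def by simp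
    have Zne: "Z \<noteq> {}"
    proof
      assume "Z = {}"
      then have "{i. i < n \<and> x i \<noteq> 0} = {}" by (simp add: Z_def)
      then show False using nz by (simp add: nzc_def)
    qed
    define v where "v = Min Z"
    have "v \<in> Z" using Zfin Zne v_def by simp
    then obtain k where k: "k < n" "x k \<noteq> 0" "\<bar>x k\<bar> = v" by (auto simp: Z_def)
    have vle: "v \<le> \<bar>x i\<bar>" if "i < n" "x i \<noteq> 0" for i
      using Zfin that unfolding v_def Z_def by (intro Min_le) auto
    have vpos: "0 < v" using k by auto
    define x' where "x' = (\<lambda>i. x i - v * ray n (p, q) i)"
    have x'eq: "x' i = (if 0 < x i then x i - v else if x i < 0 then x i + v else 0)" for i
      unfolding x'_def p_def q_def using ray_W[OF xW, of i] by simp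
    have x'R: "x' \<in> Rn n" using xR by (simp add: Rn_def x'eq)
    have x'dec: "x' j \<le> x' i" if ij: "i < j" "j < n" for i j
    proof -
      have d: "x j \<le> x i" using W_dec[OF xW, of i j] ij by simp
      have hi: "x i \<noteq> 0 \<Longrightarrow> v \<le> \<bar>x i\<bar>" using vle[of i] ij by simp
      have hj: "x j \<noteq> 0 \<Longrightarrow> v \<le> \<bar>x j\<bar>" using vle[of j] ij by simp
      show ?thesis unfolding x'eq using d hi hj by (auto simp: abs_if)
    qed
    have x'W: "x' \<in> W n" using x'R x'dec by (simp add: W_def)
    have nzsub: "{i. i < n \<and> x' i \<noteq> 0} \<subseteq> {i. i < n \<and> x i \<noteq> 0} - {k}"
    proof
      fix i assume "i \<in> {i. i < n \<and> x' i \<noteq> 0}"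
      moreover have "x' k = 0" using k by (auto simp: x'eq abs_if split: if_splits)
      ultimately show "i \<in> {i. i < n \<and> x i \<noteq> 0} - {k}" by (auto simp: x'eq split: if_splits)
    qed
    have lt: "nzc n x' < nzc n x"
    proof -
      have "{i. i < n \<and> x' i \<noteq> 0} \<subset> {i. i < n \<and> x i \<noteq> 0}" using nzsub k by auto
      then show ?thesis unfolding nzc_def by (intro psubset_card_mono) auto
    qed
    have posle: "npos n x' \<le> p"
    proof -
      have "{i. i < n \<and> 0 < x' i} \<subseteq> {i. i < n \<and> 0 < x i}"
      proof
        fix i assume a: "i \<in> {i. i < n \<and> 0 < x' i}"
        then have "x i < 0 \<Longrightarrow> v \<le> \<bar>x i\<bar>" using vle[of i] by auto
        then show "i \<in> {i. i < n \<and> 0 < x i}" using a by (auto simp: x'eq split: if_splits)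
      qed
      then show ?thesis unfolding npos_def p_def by (intro card_mono) auto
    qed
    have negle: "nneg n x' \<le> q"
    proof -
      have "{i. i < n \<and> x' i < 0} \<subseteq> {i. i < n \<and> x i < 0}"
      proof
        fix i assume a: "i \<in> {i. i < n \<and> x' i < 0}"
        then have "0 < x i \<Longrightarrow> v \<le> \<bar>x i\<bar>" using vle[of i] by auto
        then show "i \<in> {i. i < n \<and> x i < 0}" using a by (auto simp: x'eq split: if_splits)
      qed
      then show ?thesis unfolding nneg_def q_def by (intro card_mono) auto
    qed
    obtain E' c' where IH: "chn n E'" "\<forall>e\<in>E'. 0 < c' e" "x' = cmb n E' c'"
      "\<forall>e\<in>E'. le2 e (npos n x', nneg n x')" "injabs n x' \<longrightarrow> card E' = nzc n x'"
      using less.hyps[OF lt x'W] by blast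
    define e0 where "e0 = (p, q)"
    have e0n: "e0 \<notin> E'"
    proof
      assume "e0 \<in> E'"
      then have "p \<le> npos n x'" "q \<le> nneg n x'" using IH(4) by (auto simp: le2_def e0_def)
      then have "nzc n x' = nzc n x" using posle negle pq nz_split[of n x'] by simp
      then show False using lt by simp
    qed
    define E where "E = insert e0 E'"
    define c where "c = c'(e0 := v)"
    have finE': "finite E'" using chn_finite IH(1) by blast
    have le0: "le2 e e0" if "e \<in> E'" for e
      using IH(4) that posle negle by (auto simp: le2_def e0_def)
    have chE: "chn n E"
    proof -
      have "e0 \<in> Tn n" using pq pqn nz by (auto simp: Tn_def e0_def)
      then show ?thesis using IH(1) le0 unfolding chn_def E_def by (auto simp: le2_def)
    qed
    have posE: "\<forall>e\<in>E. 0 < c e" using IH(2) vpos e0n by (auto simp: E_def c_def)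
    have xE: "x = cmb n E c"
    proof
      fix i
      have "cmb n E c i = c e0 * ray n e0 i + cmb n (E - {e0}) c i"
        using cmb_remove[of E e0] finE' by (simp add: E_def)
      also have "E - {e0} = E'" using e0n by (simp add: E_def)
      also have "cmb n E' c = cmb n E' c'" unfolding c_def using e0n by (rule cmb_upd_out)
      finally have A: "cmb n E c i = c e0 * ray n e0 i + cmb n E' c' i" .
      have "c e0 = v" by (simp add: c_def)
      with A have "cmb n E c i = v * ray n e0 i + cmb n E' c' i" by simp
      moreover have "x' i = cmb n E' c' i" using IH(3) by simp
      ultimately show "x i = cmb n E c i" by (simp add: x'_def e0_def)
    qed
    have leE: "\<forall>e\<in>E. le2 e (npos n x, nneg n x)"
      using le0 by (auto simp: E_def e0_def le2_def p_def q_def)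
    have cardE: "card E = nzc n x" if inj: "injabs n x"
    proof -
      have "injabs n x'"
        unfolding injabs_def
      proof (intro allI impI)
        fix i j assume a: "i < n" "j < n" "x' i \<noteq> 0" "\<bar>x' i\<bar> = \<bar>x' j\<bar>"
        have xi: "x i \<noteq> 0" using a by (auto simp: x'eq split: if_splits)
        have vi: "v \<le> \<bar>x i\<bar>" using vle a xi by simp
        have ai: "\<bar>x' i\<bar> = \<bar>x i\<bar> - v" using xi vi by (auto simp: x'eq abs_if)
        have xj: "x j \<noteq> 0" using a ai vi by (auto simp: x'eq)
        have vj: "v \<le> \<bar>x j\<bar>" using vle a xj by simp
        have aj: "\<bar>x' j\<bar> = \<bar>x j\<bar> - v" using xj vj by (auto simp: x'eq abs_if)
        show "i = j" using inj a xi ai aj unfolding injabs_def by auto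
      qed
      then have c1: "card E' = nzc n x'" using IH(5) by simp
      have "{i. i < n \<and> x' i \<noteq> 0} = {i. i < n \<and> x i \<noteq> 0} - {k}"
      proof
        show "{i. i < n \<and> x' i \<noteq> 0} \<subseteq> {i. i < n \<and> x i \<noteq> 0} - {k}" by (rule nzsub)
        show "{i. i < n \<and> x i \<noteq> 0} - {k} \<subseteq> {i. i < n \<and> x' i \<noteq> 0}"
        proof
          fix i assume a: "i \<in> {i. i < n \<and> x i \<noteq> 0} - {k}"
          then have "\<bar>x i\<bar> \<noteq> v" using inj k unfolding injabs_def by auto
          moreover have "v \<le> \<bar>x i\<bar>" using vle a by auto
          ultimately show "i \<in> {i. i < n \<and> x' i \<noteq> 0}" using a by (auto simp: x'eq abs_if)
        qed
      qed
      then have "nzc n x' = nzc n x - 1" unfolding nzc_def using k by simp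
      then show ?thesis using c1 e0n finE' nz by (simp add: E_def)
    qed
    show ?thesis using chE posE xE leE cardE by blast
  qed
qed

lemma maxchain:
  assumes ch: "chn n E" and cE: "card E = n"
  shows "\<exists>s. E = Mx n s"
proof -
  define sm :: "nat \<times> nat \<Rightarrow> nat" where "sm e = fst e + snd e" for e
  have fin: "finite E" using chn_finite ch by blast
  have inj: "inj_on sm E"
  proof (rule inj_onI)
    fix e e' assume "e \<in> E" "e' \<in> E" "sm e = sm e'"
    moreover then have "le2 e e' \<or> le2 e' e" using ch by (auto simp: chn_def)
    ultimately show "e = e'" by (auto simp: le2_def sm_def prod_eq_iff)
  qed
  have sub: "sm ` E \<subseteq> {1..n}" using ch by (auto simp: chn_def Tn_def sm_def)
  have img: "sm ` E = {1..n}"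
    using card_subset_eq[OF _ sub] card_image[OF inj] cE by simp
  have "\<forall>m\<in>{1..n}. \<exists>e\<in>E. sm e = m" using img by (metis imageE)
  then obtain el where el: "\<forall>m\<in>{1..n}. el m \<in> E \<and> sm (el m) = m" by metis
  define el0 where "el0 m = (if m = 0 then (0,0) else el m)" for m
  define s where "s j = (fst (el0 j) < fst (el0 (Suc j)))" for j
  have pt: "ptn s m = el0 m" if "m \<le> n" for m
    using that
  proof (induction m)
    case 0 then show ?case by (simp add: el0_def)
  next
    case (Suc m)
    have e1: "el0 (Suc m) \<in> E" "sm (el0 (Suc m)) = Suc m" using el Suc.prems by (auto simp: el0_def)
    have s0: "sm (el0 m) = m" using el Suc.prems by (cases "m = 0") (auto simp: el0_def sm_def)
    have le: "le2 (el0 m) (el0 (Suc m))"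
    proof (cases "m = 0")
      case True then show ?thesis by (simp add: el0_def le2_def)
    next
      case False
      then have "el0 m \<in> E" using el Suc.prems by (auto simp: el0_def)
      then have "le2 (el0 m) (el0 (Suc m)) \<or> le2 (el0 (Suc m)) (el0 m)" using ch e1 by (auto simp: chn_def)
      then show ?thesis using e1 s0 by (auto simp: le2_def sm_def)
    qed
    have IH: "ptn s m = el0 m" using Suc by simp
    have sm: "s m = (fst (el0 m) < fst (el0 (Suc m)))" by (simp add: s_def)
    show ?case
      using le e1(2) s0 IH sm by (auto simp: le2_def sm_def prod_eq_iff)
  qed
  have "E = ptn s ` {1..n}"
  proof
    show "E \<subseteq> ptn s ` {1..n}"
    proof
      fix e assume e: "e \<in> E"
      then have m: "sm e \<in> {1..n}" using sub by auto
      then have "el (sm e) = e" using el inj e by (metis inj_on_def)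
      then have "ptn s (sm e) = e" using pt[of "sm e"] m by (auto simp: el0_def)
      then show "e \<in> ptn s ` {1..n}" using m by (metis imageI)
    qed
    show "ptn s ` {1..n} \<subseteq> E" using pt el by (auto simp: el0_def)
  qed
  then show ?thesis by (auto simp: Mx_def)
qed



definition OO0 :: "nat \<Rightarrow> (nat \<Rightarrow> real) set" where
  "OO0 n = W0 n - arr_union n"

lemma chn_Mx: "chn n (Mx n s)"
  unfolding chn_def
proof (intro conjI ballI)
  show "Mx n s \<subseteq> Tn n" by (rule Mx_Tn)
  fix e e' assume "e \<in> Mx n s" "e' \<in> Mx n s"
  then obtain m m' where "e = ptn s m" "e' = ptn s m'" by (auto simp: Mx_def)
  then show "le2 e e' \<or> le2 e' e"
  proof (cases "m \<le> m'")
    case True then show ?thesis using ptn_mono[OF True, of s] \<open>e = ptn s m\<close> \<open>e' = ptn s m'\<close> by (simp add: le2_def)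
  next
    case False then have "m' \<le> m" by simp
    then show ?thesis using ptn_mono[of m' m s] \<open>e = ptn s m\<close> \<open>e' = ptn s m'\<close> by (simp add: le2_def)
  qed
qed

lemma chn_sub_Mx: "E \<subseteq> Mx n s \<Longrightarrow> chn n E"
  using chn_Mx chn_subset by blast

lemma W0_W: "x \<in> W0 n \<Longrightarrow> x \<in> W n"
  by (auto simp: W0_def W_def less_imp_le)

lemma in_arr: "i \<le> j \<Longrightarrow> j < n \<Longrightarrow> x \<in> lam_hyp n i j \<Longrightarrow> x \<in> arr_union n"
  unfolding arr_union_def
  by (rule UN_I[of i]) (auto intro: UN_I[of j])

lemma cover:
  assumes x: "x \<in> OO0 n"
  shows "\<exists>s. x \<in> Oc n s"
proof -
  have xW0: "x \<in> W0 n" and na: "x \<notin> arr_union n" using x by (auto simp: OO0_def)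
  have xW: "x \<in> W n" using W0_W[OF xW0] .
  have nz: "x i \<noteq> 0" if i: "i < n" for i
  proof
    assume "x i = 0"
    then have "x \<in> lam_hyp n i i" using xW0 by (simp add: lam_hyp_def W0_def)
    then have "x \<in> arr_union n" using i by (intro in_arr[of i i]) auto
    then show False using na by simp
  qed
  have ia: "injabs n x"
    unfolding injabs_def
  proof (intro allI impI)
    fix i j assume a: "i < n" "j < n" "x i \<noteq> 0" "\<bar>x i\<bar> = \<bar>x j\<bar>"
    show "i = j"
    proof (rule ccontr)
      assume ne: "i \<noteq> j"
      define a where "a = min i j"
      define b where "b = max i j"
      have ab: "a < b" "b < n" "{a, b} = {i, j}" using ne a by (auto simp: a_def b_def)
      have "x b < x a" using xW0 ab by (auto simp: W0_def)
      then have "x a \<noteq> x b" by simp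
      then have "x i \<noteq> x j" using ab(3) by (auto simp: doubleton_eq_iff)
      then have "x i + x j = 0" using a(4) by (auto simp: abs_if split: if_splits)
      then have "x a + x b = 0" using ab(3) by (auto simp: doubleton_eq_iff add.commute)
      then have "x \<in> lam_hyp n a b" using xW0 ab by (auto simp: lam_hyp_def W0_def)
      then have "x \<in> arr_union n" using ab by (intro in_arr[of a b]) auto
      then show False using na by simp
    qed
  qed
  have nzn: "nzc n x = n"
  proof -
    have "{i. i < n \<and> x i \<noteq> 0} = {..<n}" using nz by auto
    then show ?thesis by (simp add: nzc_def)
  qed
  obtain E c where E: "chn n E" "\<forall>e\<in>E. 0 < c e" "x = cmb n E c" "card E = n"
    using peel[OF xW] ia nzn by metis
  obtain s where "E = Mx n s" using maxchain[OF E(1) E(4)] by blast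
  then have "x \<in> Oc n s" using E unfolding Oc_Mx by blast
  then show ?thesis by blast
qed

lemma Oc_disjoint:
  assumes "y \<in> Oc n s" "y \<in> Oc n s'"
  shows "Mx n s = Mx n s'"
proof -
  obtain c where c: "y = cmb n (Mx n s) c" "\<forall>e\<in>Mx n s. 0 < c e" using assms(1) unfolding Oc_Mx by blast
  obtain c' where c': "y = cmb n (Mx n s') c'" "\<forall>e\<in>Mx n s'. 0 < c' e" using assms(2) unfolding Oc_Mx by blast
  show ?thesis using U_unique[OF chn_Mx chn_Mx c(2) c'(2)] c(1) c'(1) by simp
qed

lemma cont_coord: "continuous_on UNIV (\<lambda>y::nat \<Rightarrow> real. y i)"
  by simp

lemma cont_TT: "continuous_on UNIV (TT n s j)"
proof (cases "j < n")
  case True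
  have "TT n s j = (\<lambda>y. sg s j * y (ix n s j))" using True by (simp add: TT_def fun_eq_iff)
  then show ?thesis by (simp add: continuous_on_mult_left)
next
  case False
  then have "TT n s j = (\<lambda>y. 0)" by (simp add: TT_def fun_eq_iff)
  then show ?thesis by simp
qed

lemma closed_Rn: "closed (Rn n)"
proof -
  have "Rn n = {y. \<forall>i. n \<le> i \<longrightarrow> y i = 0}" by (simp add: Rn_def)
  moreover have "closed {y::nat\<Rightarrow>real. n \<le> i \<longrightarrow> y i = 0}" for i
  proof (cases "n \<le> i")
    case True
    then have "{y::nat\<Rightarrow>real. n \<le> i \<longrightarrow> y i = 0} = {y. y i = (\<lambda>_. 0) y}" by simp
    then show ?thesis using closed_Collect_eq[OF cont_coord[of i], of "\<lambda>_. 0"] by simp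
  next
    case False then show ?thesis by simp
  qed
  ultimately show ?thesis by (simp add: closed_Collect_all)
qed

lemma closed_kone: "closed (kone n (Mx n s))"
proof -
  have "kone n (Mx n s) = Rn n \<inter> (\<Inter>j\<in>{..<n}. {y. TT n s (Suc j) y \<le> TT n s j y})"
    unfolding kone_Mx by auto
  moreover have "closed {y. TT n s (Suc j) y \<le> TT n s j y}" for j
    by (rule closed_Collect_le[OF cont_TT cont_TT])
  ultimately show ?thesis using closed_Rn by (auto intro!: closed_Int closed_INT)
qed

lemma open_Oc_part: "open (\<Inter>j\<in>{..<n}. {y. TT n s (Suc j) y < TT n s j y})"
  by (intro open_INT finite_lessThan ballI open_Collect_less cont_TT)

lemma Oc_sub: "Oc n s \<subseteq> OO0 n"
  using Oc_sub_O by (auto simp: OO0_def)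

lemma OO0_Rn: "OO0 n \<subseteq> Rn n"
  by (auto simp: OO0_def W0_def)

lemma openin_Oc: "openin (top_of_set (OO0 n)) (Oc n s)"
proof -
  have e: "(\<Inter>j\<in>{..<n}. {y. TT n s (Suc j) y < TT n s j y}) = {y. \<forall>j<n. TT n s (Suc j) y < TT n s j y}"
    by blast
  have E1: "Oc n s = OO0 n \<inter> {y. \<forall>j<n. TT n s (Suc j) y < TT n s j y}"
  proof (intro set_eqI iffI)
    fix y assume y: "y \<in> Oc n s"
    then have "y \<in> OO0 n" using Oc_sub by blast
    moreover have "\<forall>j<n. TT n s (Suc j) y < TT n s j y" using y unfolding Oc_def by blast
    ultimately show "y \<in> OO0 n \<inter> {y. \<forall>j<n. TT n s (Suc j) y < TT n s j y}" by blast
  next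
    fix y assume y: "y \<in> OO0 n \<inter> {y. \<forall>j<n. TT n s (Suc j) y < TT n s j y}"
    then have "y \<in> Rn n" using OO0_Rn by blast
    then show "y \<in> Oc n s" using y unfolding Oc_def by blast
  qed
  have E2: "Oc n s = OO0 n \<inter> (\<Inter>j\<in>{..<n}. {y. TT n s (Suc j) y < TT n s j y})"
    unfolding e by (rule E1)
  show ?thesis unfolding E2 by (rule openin_open_Int[OF open_Oc_part])
qed

lemma Oc_kone: "Oc n s \<subseteq> kone n (Mx n s)"
  unfolding Oc_Mx kone_def by (auto intro: less_imp_le)

lemma cmb_pos_part:
  assumes "finite E"
  shows "cmb n E c = cmb n {e\<in>E. c e \<noteq> 0} c"
  unfolding cmb_def using assms by (intro ext sum.mono_neutral_right) auto

lemma closedin_Oc: "closedin (top_of_set (OO0 n)) (Oc n s)"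
proof -
  have "Oc n s = OO0 n \<inter> kone n (Mx n s)"
  proof
    show "Oc n s \<subseteq> OO0 n \<inter> kone n (Mx n s)" using Oc_sub Oc_kone by blast
    show "OO0 n \<inter> kone n (Mx n s) \<subseteq> Oc n s"
    proof
      fix y assume y: "y \<in> OO0 n \<inter> kone n (Mx n s)"
      obtain s' where s': "y \<in> Oc n s'" using cover y by blast
      obtain c' where c': "y = cmb n (Mx n s') c'" "\<forall>e\<in>Mx n s'. 0 < c' e" using s' unfolding Oc_Mx by blast
      obtain c where c: "y = cmb n (Mx n s) c" "\<forall>e\<in>Mx n s. 0 \<le> c e" using y unfolding kone_def by blast
      define E where "E = {e\<in>Mx n s. c e \<noteq> 0}"
      have yE: "y = cmb n E c" using c(1) cmb_pos_part[OF finite_Mx] by (simp add: E_def)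
      have posE: "\<forall>e\<in>E. 0 < c e" using c(2) by (auto simp: E_def order_le_less)
      have chE: "chn n E" by (rule chn_sub_Mx[of _ n s]) (auto simp: E_def)
      have "E = Mx n s'" using U_unique[OF chE chn_Mx posE c'(2)] yE c'(1) by simp
      then have "card E = card (Mx n s)" by (simp add: card_Mx)
      then have "E = Mx n s" using card_subset_eq[OF finite_Mx, of E] by (auto simp: E_def)
      then have "\<forall>e\<in>Mx n s. 0 < c e" using posE by simp
      then show "y \<in> Oc n s" unfolding Oc_Mx using c(1) by blast
    qed
  qed
  then show ?thesis by (metis closedin_closed_Int[OF closed_kone])
qed

definition lpath :: "(nat \<Rightarrow> real) \<Rightarrow> (nat \<Rightarrow> real) \<Rightarrow> real \<Rightarrow> nat \<Rightarrow> real" where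
  "lpath y z t = (\<lambda>i. (1 - t) * y i + t * z i)"

lemma cont_lpath: "continuous_on S (lpath y z)"
  unfolding lpath_def by (intro continuous_on_coordinatewise_then_product continuous_intros)

lemma TT_lpath: "TT n s j (lpath y z t) = (1 - t) * TT n s j y + t * TT n s j z"
  by (simp add: TT_def lpath_def algebra_simps)

lemma lpath_Rn: "y \<in> Rn n \<Longrightarrow> z \<in> Rn n \<Longrightarrow> lpath y z t \<in> Rn n"
  by (simp add: Rn_def lpath_def)

lemma Oc_lpath:
  assumes "y \<in> Oc n s" "z \<in> Oc n s" "0 \<le> t" "t \<le> 1"
  shows "lpath y z t \<in> Oc n s"
proof -
  have "TT n s (Suc j) (lpath y z t) < TT n s j (lpath y z t)" if j: "j < n" for j
  proof -
    have a: "TT n s (Suc j) y < TT n s j y" "TT n s (Suc j) z < TT n s j z" using assms j by (auto simp: Oc_def)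
    show ?thesis unfolding TT_lpath
    proof (cases "t = 0")
      case True then show "(1 - t) * TT n s (Suc j) y + t * TT n s (Suc j) z < (1 - t) * TT n s j y + t * TT n s j z"
        using a by simp
    next
      case False
      then have "0 < t" using assms by simp
      then have "t * TT n s (Suc j) z < t * TT n s j z" using a by simp
      moreover have "(1 - t) * TT n s (Suc j) y \<le> (1 - t) * TT n s j y"
        using a assms by (intro mult_left_mono) auto
      ultimately show "(1 - t) * TT n s (Suc j) y + t * TT n s (Suc j) z < (1 - t) * TT n s j y + t * TT n s j z"
        by simp
    qed
  qed
  then show ?thesis using assms lpath_Rn by (auto simp: Oc_def)
qed

lemma connected_Oc: "connected (Oc n s)"
proof -
  have "path_connected (Oc n s)"
    unfolding path_connected_def
  proof (intro ballI)
    fix y z assume yz: "y \<in> Oc n s" "z \<in> Oc n s"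
    have "path (lpath y z)" unfolding path_def by (rule cont_lpath)
    moreover have "path_image (lpath y z) \<subseteq> Oc n s"
      unfolding path_image_def using Oc_lpath[OF yz] by auto
    moreover have "pathstart (lpath y z) = y" "pathfinish (lpath y z) = z"
      by (simp_all add: pathstart_def pathfinish_def lpath_def)
    ultimately show "\<exists>g. path g \<and> path_image g \<subseteq> Oc n s \<and> pathstart g = y \<and> pathfinish g = z"
      by blast
  qed
  then show ?thesis by (rule path_connected_imp_connected)
qed

lemma component_Oc:
  assumes x: "x \<in> Oc n s"
  shows "connected_component_set (OO0 n) x = Oc n s"
proof
  show "Oc n s \<subseteq> connected_component_set (OO0 n) x"
    by (rule connected_component_maximal[OF x connected_Oc Oc_sub])
  let ?C = "connected_component_set (OO0 n) x"
  have "connectedin (top_of_set (OO0 n)) ?C"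
    using connected_component_subset connected_connected_component
    by (simp add: connectedin_subtopology)
  then have "?C \<subseteq> Oc n s \<or> disjnt ?C (Oc n s)"
    using connectedin_clopen_cases closedin_Oc openin_Oc by blast
  moreover have "x \<in> ?C" using x Oc_sub by auto
  ultimately show "?C \<subseteq> Oc n s" using x unfolding disjnt_def by blast
qed

lemma Oc_ne: "cmb n (Mx n s) (\<lambda>_. 1) \<in> Oc n s"
  unfolding Oc_Mx by auto

lemma closure_Oc: "closure (Oc n s) = kone n (Mx n s)"
proof
  show "closure (Oc n s) \<subseteq> kone n (Mx n s)"
    by (rule closure_minimal[OF Oc_kone closed_kone])
  show "kone n (Mx n s) \<subseteq> closure (Oc n s)"
  proof
    fix y assume y: "y \<in> kone n (Mx n s)"
    define z where "z = cmb n (Mx n s) (\<lambda>_. 1)"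
    have z: "z \<in> Oc n s" using Oc_ne z_def by simp
    define w where "w k = lpath y z (1 / real (Suc k))" for k
    have "w k \<in> Oc n s" for k
    proof -
      have yR: "y \<in> Rn n" using y kone_Mx by auto
      have "TT n s (Suc j) (w k) < TT n s j (w k)" if j: "j < n" for j
      proof -
        let ?t = "1 / real (Suc k)"
        have t: "0 < ?t" "?t \<le> 1" by auto
        have a: "TT n s (Suc j) y \<le> TT n s j y" using y j unfolding kone_Mx by auto
        have b: "TT n s (Suc j) z < TT n s j z" using z j by (auto simp: Oc_def)
        have "?t * TT n s (Suc j) z < ?t * TT n s j z" using b t by (intro mult_strict_left_mono)
        moreover have "(1 - ?t) * TT n s (Suc j) y \<le> (1 - ?t) * TT n s j y"
          using a t by (intro mult_left_mono) auto
        ultimately show ?thesis unfolding w_def TT_lpath by simp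
      qed
      moreover have "w k \<in> Rn n" unfolding w_def using lpath_Rn yR z by (auto simp: Oc_def)
      ultimately show ?thesis by (simp add: Oc_def)
    qed
    moreover have "w \<longlonglongrightarrow> y"
    proof -
      have "(\<lambda>k. 1 / real (Suc k)) \<longlonglongrightarrow> 0" by (rule LIMSEQ_Suc[OF lim_inverse_n'])
      then have "(\<lambda>k. lpath y z (1 / real (Suc k))) \<longlonglongrightarrow> lpath y z 0"
        by (rule continuous_on_tendsto_compose[OF cont_lpath[of UNIV y z]]) auto
      moreover have "lpath y z 0 = y" by (simp add: lpath_def)
      ultimately have "(\<lambda>k. lpath y z (1 / real (Suc k))) \<longlonglongrightarrow> y" by simp
      then show ?thesis unfolding w_def .
    qed
    ultimately show "y \<in> closure (Oc n s)" unfolding closure_sequential by blast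
  qed
qed

lemma chambers_eq: "chambers n = {kone n (Mx n s) | s. True}"
proof
  show "chambers n \<subseteq> {kone n (Mx n s) | s. True}"
  proof
    fix C assume "C \<in> chambers n"
    then obtain x where x: "x \<in> OO0 n" "C = closure (connected_component_set (OO0 n) x)"
      by (auto simp: chambers_def OO0_def)
    obtain s where s: "x \<in> Oc n s" using cover[OF x(1)] by blast
    then have "C = kone n (Mx n s)" using x component_Oc closure_Oc by simp
    then show "C \<in> {kone n (Mx n s) | s. True}" by blast
  qed
  show "{kone n (Mx n s) | s. True} \<subseteq> chambers n"
  proof
    fix C assume "C \<in> {kone n (Mx n s) | s. True}"
    then obtain s where s: "C = kone n (Mx n s)" by blast
    define z where "z = cmb n (Mx n s) (\<lambda>_. 1)"
    have z: "z \<in> Oc n s" using Oc_ne z_def by simp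
    then have "C = closure (connected_component_set (OO0 n) z)" using s component_Oc closure_Oc by simp
    moreover have "z \<in> W0 n - arr_union n" using Oc_sub z by (auto simp: OO0_def)
    ultimately show "C \<in> chambers n" unfolding chambers_def OO0_def by blast
  qed
qed



lemma lin_form_cmb: "lin_form n a (cmb n E c) = (\<Sum>e\<in>E. c e * lin_form n a (ray n e))"
proof -
  have "lin_form n a (cmb n E c) = (\<Sum>i<n. \<Sum>e\<in>E. a i * (c e * ray n e i))"
    unfolding lin_form_def cmb_def by (simp add: sum_distrib_left)
  also have "\<dots> = (\<Sum>e\<in>E. \<Sum>i<n. c e * (a i * ray n e i))"
    by (subst sum.swap) (simp add: mult.left_commute)
  also have "\<dots> = (\<Sum>e\<in>E. c e * lin_form n a (ray n e))"
    unfolding lin_form_def by (simp add: sum_distrib_left)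
  finally show ?thesis .
qed

lemma cmb_zero: "cmb n E (\<lambda>_. 0) = (\<lambda>i. 0)"
  by (simp add: cmb_def)

lemma lin_form_zero: "lin_form n a (\<lambda>i. 0) = 0"
  by (simp add: lin_form_def)

lemma ray_cmb:
  assumes "finite E" "e \<in> E"
  shows "ray n e = cmb n E (\<lambda>e'. if e' = e then 1 else 0)"
proof
  fix i
  have "cmb n E (\<lambda>e'. if e' = e then 1 else 0) i = (\<Sum>e'\<in>E. if e' = e then ray n e i else 0)"
    unfolding cmb_def by (rule sum.cong) auto
  also have "\<dots> = ray n e i" using assms by (simp add: sum.delta')
  finally show "ray n e i = cmb n E (\<lambda>e'. if e' = e then 1 else 0) i" by simp
qed

lemma kone_I: "\<forall>e\<in>E. 0 \<le> c e \<Longrightarrow> cmb n E c \<in> kone n E"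
  unfolding kone_def by blast

lemma ray_kone: "finite E \<Longrightarrow> e \<in> E \<Longrightarrow> ray n e \<in> kone n E"
proof -
  assume a: "finite E" "e \<in> E"
  have "cmb n E (\<lambda>e'. if e' = e then 1 else 0) \<in> kone n E" by (rule kone_I) simp
  then show ?thesis using ray_cmb[OF a] by simp
qed

lemma zero_kone: "(\<lambda>i. 0) \<in> kone n E"
proof -
  have "cmb n E (\<lambda>_. 0) \<in> kone n E" by (rule kone_I) simp
  then show ?thesis by (simp add: cmb_zero)
qed

lemma kone_face:
  assumes fin: "finite M" and MT: "M \<subseteq> Tn n" and neg: "\<forall>e\<in>M. lin_form n a (ray n e) \<le> 0"
  shows "kone n M \<inter> {x \<in> Rn n. lin_form n a x = 0} = kone n {e\<in>M. lin_form n a (ray n e) = 0}"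
proof (intro set_eqI iffI)
  fix x assume x: "x \<in> kone n M \<inter> {x \<in> Rn n. lin_form n a x = 0}"
  then obtain c where c: "x = cmb n M c" "\<forall>e\<in>M. 0 \<le> c e" unfolding kone_def by blast
  have "(\<Sum>e\<in>M. c e * lin_form n a (ray n e)) = 0" using x c lin_form_cmb by simp
  then have s0: "(\<Sum>e\<in>M. - (c e * lin_form n a (ray n e))) = 0" by (simp add: sum_negf)
  have nn: "\<forall>e\<in>M. 0 \<le> - (c e * lin_form n a (ray n e))"
    using c(2) neg by (simp add: mult_nonneg_nonpos)
  have z0: "\<forall>e\<in>M. - (c e * lin_form n a (ray n e)) = 0"
    using sum_nonneg_eq_0_iff[OF fin, of "\<lambda>e. - (c e * lin_form n a (ray n e))"] nn s0 by blast
  have z: "\<forall>e\<in>M. lin_form n a (ray n e) \<noteq> 0 \<longrightarrow> c e = 0"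
    using z0 by auto
  have "x = cmb n {e\<in>M. lin_form n a (ray n e) = 0} c"
    unfolding c(1) cmb_def
  proof (rule ext, rule sum.mono_neutral_right[OF fin])
    fix i
    show "{e\<in>M. lin_form n a (ray n e) = 0} \<subseteq> M" by auto
    show "\<forall>e\<in>M - {e\<in>M. lin_form n a (ray n e) = 0}. c e * ray n e i = 0" using z by auto
  qed
  then show "x \<in> kone n {e\<in>M. lin_form n a (ray n e) = 0}" unfolding kone_def using c(2) by auto
next
  fix x assume x: "x \<in> kone n {e\<in>M. lin_form n a (ray n e) = 0}"
  then obtain c where c: "x = cmb n {e\<in>M. lin_form n a (ray n e) = 0} c" "\<forall>e\<in>{e\<in>M. lin_form n a (ray n e) = 0}. 0 \<le> c e"
    unfolding kone_def by blast
  define c' where "c' e = (if lin_form n a (ray n e) = 0 then c e else 0)" for e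
  have "x = cmb n M c'"
    unfolding c(1) cmb_def c'_def
    by (rule ext, rule sum.mono_neutral_cong_left[OF fin]) auto
  moreover have "\<forall>e\<in>M. 0 \<le> c' e" using c(2) by (auto simp: c'_def)
  ultimately have "x \<in> kone n M" unfolding kone_def by blast
  moreover have "lin_form n a x = 0" using c(1) by (simp add: lin_form_cmb)
  moreover have "x \<in> Rn n" unfolding c(1) by (rule cmb_Rn) (use MT in auto)
  ultimately show "x \<in> kone n M \<inter> {x \<in> Rn n. lin_form n a x = 0}" by simp
qed

definition Dv :: "nat \<Rightarrow> (nat \<Rightarrow> bool) \<Rightarrow> nat \<Rightarrow> nat \<Rightarrow> real" where
  "Dv n s j = (\<lambda>i. if j < n \<and> i = ix n s j then sg s j else 0)"

lemma lin_form_Dv: "lin_form n (Dv n s j) y = TT n s j y"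
proof (cases "j < n")
  case True
  have "lin_form n (Dv n s j) y = (\<Sum>i<n. if i = ix n s j then sg s j * y i else 0)"
    unfolding lin_form_def Dv_def using True by (intro sum.cong) auto
  also have "\<dots> = sg s j * y (ix n s j)" using ix_lt[OF True] by simp
  finally show ?thesis using True by (simp add: TT_def)
next
  case False
  then show ?thesis by (simp add: lin_form_def Dv_def TT_def)
qed

lemma lin_form_sum: "lin_form n (\<lambda>i. \<Sum>m\<in>M. f m i) y = (\<Sum>m\<in>M. lin_form n (f m) y)"
  unfolding lin_form_def by (simp add: sum_distrib_right) (rule sum.swap)

lemma lin_form_diff: "lin_form n (\<lambda>i. f i - h i) y = lin_form n f y - lin_form n h y"
  unfolding lin_form_def by (simp add: left_diff_distrib sum_subtractf)

lemma lin_form_neg: "lin_form n (\<lambda>i. - f i) y = - lin_form n f y"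
  unfolding lin_form_def by (simp add: sum_negf)

definition av :: "nat \<Rightarrow> (nat \<Rightarrow> bool) \<Rightarrow> (nat \<times> nat) set \<Rightarrow> nat \<Rightarrow> real" where
  "av n s E = (\<lambda>i. - (\<Sum>m\<in>{m\<in>{1..n}. ptn s m \<notin> E}. Dv n s (m - 1) i - Dv n s m i))"

lemma lin_form_av:
  "lin_form n (av n s E) y = - (\<Sum>m\<in>{m\<in>{1..n}. ptn s m \<notin> E}. TT n s (m - 1) y - TT n s m y)"
  unfolding av_def lin_form_neg lin_form_sum lin_form_diff lin_form_Dv ..

lemma TT_ray_all: "m \<le> n \<Longrightarrow> TT n s j (ray n (ptn s m)) = (if j < m then 1 else 0)"
  by (cases "j < n") (auto simp: TT_ray TT_ge)

lemma av_ray: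
  assumes m: "m' \<in> {1..n}"
  shows "lin_form n (av n s E) (ray n (ptn s m')) = (if ptn s m' \<in> E then 0 else -1)"
proof -
  let ?J = "{m\<in>{1..n}. ptn s m \<notin> E}"
  have "lin_form n (av n s E) (ray n (ptn s m')) = - (\<Sum>m\<in>?J. if m = m' then 1 else 0)"
    unfolding lin_form_av
  proof (intro arg_cong[where f = uminus] sum.cong refl)
    fix m assume "m \<in> ?J"
    then have "1 \<le> m" "m \<le> n" by auto
    then show "TT n s (m - 1) (ray n (ptn s m')) - TT n s m (ray n (ptn s m')) = (if m = m' then 1 else 0)"
      using m by (auto simp: TT_ray_all)
  qed
  also have "\<dots> = (if ptn s m' \<in> E then 0 else -1)" using m by (simp add: sum.delta')
  finally show ?thesis .
qed

lemma av_Rn: "av n s E \<in> Rn n"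
proof -
  have "Dv n s j i = 0" if "n \<le> i" for j i using that ix_lt[of j n s] by (auto simp: Dv_def)
  then show ?thesis by (simp add: Rn_def av_def)
qed

lemma faces_eq: "faces n = {kone n E | E. \<exists>s. E \<subseteq> Mx n s}"
proof
  show "faces n \<subseteq> {kone n E | E. \<exists>s. E \<subseteq> Mx n s}"
  proof
    fix F assume "F \<in> faces n"
    then obtain C where C: "C \<in> chambers n" and
      F: "F = C \<or> (\<exists>a b. supporting n a b C \<and> F = C \<inter> {x \<in> Rn n. lin_form n a x = b})"
      unfolding faces_def by blast
    obtain s where s: "C = kone n (Mx n s)" using C chambers_eq by blast
    show "F \<in> {kone n E | E. \<exists>s. E \<subseteq> Mx n s}"
      using F
    proof
      assume "F = C" then show ?thesis using s by blast
    next
      assume "\<exists>a b. supporting n a b C \<and> F = C \<inter> {x \<in> Rn n. lin_form n a x = b}"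
      then obtain a b where sup: "supporting n a b C" and FC: "F = C \<inter> {x \<in> Rn n. lin_form n a x = b}" by blast
      have le: "C \<subseteq> {x. lin_form n a x \<le> b}" and ne: "C \<inter> {x \<in> Rn n. lin_form n a x = b} \<noteq> {}"
        using sup by (auto simp: supporting_def)
      have b0: "0 \<le> b" using le zero_kone[of n "Mx n s"] s lin_form_zero[of n a] by auto
      obtain y where y: "y \<in> C" "lin_form n a y = b" using ne by blast
      obtain c where c: "y = cmb n (Mx n s) c" "\<forall>e\<in>Mx n s. 0 \<le> c e" using y s unfolding kone_def by blast
      have "cmb n (Mx n s) (\<lambda>e. 2 * c e) \<in> C" using c(2) s unfolding kone_def by force
      moreover have "lin_form n a (cmb n (Mx n s) (\<lambda>e. 2 * c e)) = 2 * b"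
        using y c by (simp add: lin_form_cmb sum_distrib_left[symmetric] mult.assoc)
      ultimately have "2 * b \<le> b" using le by auto
      then have b: "b = 0" using b0 by simp
      have neg: "\<forall>e\<in>Mx n s. lin_form n a (ray n e) \<le> 0"
        using ray_kone[OF finite_Mx] le s b by blast
      have "F = kone n {e\<in>Mx n s. lin_form n a (ray n e) = 0}"
        using FC s b kone_face[OF finite_Mx Mx_Tn neg] by simp
      then show ?thesis by blast
    qed
  qed
  show "{kone n E | E. \<exists>s. E \<subseteq> Mx n s} \<subseteq> faces n"
  proof
    fix F assume "F \<in> {kone n E | E. \<exists>s. E \<subseteq> Mx n s}"
    then obtain E s where F: "F = kone n E" and Es: "E \<subseteq> Mx n s" by blast
    have C: "kone n (Mx n s) \<in> chambers n" using chambers_eq by blast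
    show "F \<in> faces n"
    proof (cases "E = Mx n s")
      case True then show ?thesis using C F unfolding faces_def by blast
    next
      case False
      then obtain e where e: "e \<in> Mx n s" "e \<notin> E" using Es by blast
      then obtain m' where m': "m' \<in> {1..n}" "e = ptn s m'" by (auto simp: Mx_def)
      let ?a = "av n s E"
      have L: "\<forall>e\<in>Mx n s. lin_form n ?a (ray n e) = (if e \<in> E then 0 else -1)"
        using av_ray by (auto simp: Mx_def)
      have neg: "\<forall>e\<in>Mx n s. lin_form n ?a (ray n e) \<le> 0" using L by simp
      have Lm: "lin_form n ?a (ray n e) = -1" using L e by simp
      have nz: "\<exists>i<n. ?a i \<noteq> 0"
      proof (rule ccontr)
        assume "\<not> (\<exists>i<n. ?a i \<noteq> 0)"
        then have "lin_form n ?a (ray n e) = 0" by (simp add: lin_form_def)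
        then show False using Lm by simp
      qed
      have sub: "kone n (Mx n s) \<subseteq> {x. lin_form n ?a x \<le> 0}"
      proof
        fix x assume "x \<in> kone n (Mx n s)"
        then obtain c where c: "x = cmb n (Mx n s) c" "\<forall>e\<in>Mx n s. 0 \<le> c e" unfolding kone_def by blast
        have "lin_form n ?a x = (\<Sum>e\<in>Mx n s. c e * lin_form n ?a (ray n e))" using c lin_form_cmb by simp
        also have "\<dots> \<le> 0" using c(2) neg by (intro sum_nonpos) (simp add: mult_nonneg_nonpos)
        finally show "x \<in> {x. lin_form n ?a x \<le> 0}" by simp
      qed
      have z: "(\<lambda>i. 0) \<in> kone n (Mx n s) \<inter> {x \<in> Rn n. lin_form n ?a x = 0}"
        using zero_kone lin_form_zero by (auto simp: Rn_def)
      have supp: "supporting n ?a 0 (kone n (Mx n s))"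
        unfolding supporting_def using av_Rn nz sub z by blast
      have "{e\<in>Mx n s. lin_form n ?a (ray n e) = 0} = E"
      proof (intro set_eqI iffI)
        fix x assume "x \<in> {e\<in>Mx n s. lin_form n ?a (ray n e) = 0}"
        then show "x \<in> E" using L by (auto split: if_splits)
      next
        fix x assume "x \<in> E" then show "x \<in> {e\<in>Mx n s. lin_form n ?a (ray n e) = 0}" using L Es by auto
      qed
      then have "kone n (Mx n s) \<inter> {x \<in> Rn n. lin_form n ?a x = 0} = F"
        using kone_face[OF finite_Mx Mx_Tn neg] F by simp
      then show ?thesis using C supp unfolding faces_def by blast
    qed
  qed
qed



interpretation fv: vector_space "\<lambda>(r::real) (f::nat\<Rightarrow>real). (\<lambda>i. r * f i)"
  by unfold_locales (simp_all add: fun_eq_iff algebra_simps)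

lemma lin_indep_iff:
  assumes "finite B"
  shows "lin_indep B \<longleftrightarrow> \<not> fv.dependent B"
proof -
  have eq: "((\<Sum>v\<in>B. (\<lambda>i. u v * v i)) = 0) \<longleftrightarrow> (\<forall>i. (\<Sum>v\<in>B. u v * v i) = 0)" for u
    by (simp add: fun_eq_iff sum_fun_apply)
  show ?thesis
    unfolding fv.dependent_finite[OF assms] lin_indep_def eq by blast
qed

lemma cmb_span: "finite E \<Longrightarrow> cmb n E c \<in> fv.span (ray n ` E)"
proof -
  assume fin: "finite E"
  have "cmb n E c = (\<Sum>e\<in>E. (\<lambda>i. c e * ray n e i))"
    by (simp add: fun_eq_iff sum_fun_apply cmb_def)
  also have "\<dots> \<in> fv.span (ray n ` E)"
  proof (rule fv.span_sum)
    fix e assume "e \<in> E"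
    then have "ray n e \<in> fv.span (ray n ` E)" by (intro fv.span_base) simp
    then show "(\<lambda>i. c e * ray n e i) \<in> fv.span (ray n ` E)" by (rule fv.span_scale)
  qed
  finally show ?thesis .
qed

lemma ptn_of_Mx: "E \<subseteq> Mx n s \<Longrightarrow> E = ptn s ` {m\<in>{1..n}. ptn s m \<in> E}"
  unfolding Mx_def by blast

lemma inj_ray_Mx: "E \<subseteq> Mx n s \<Longrightarrow> inj_on (ray n) E"
proof (rule inj_onI)
  fix e e' assume a: "E \<subseteq> Mx n s" "e \<in> E" "e' \<in> E" "ray n e = ray n e'"
  obtain m where m: "m \<in> {1..n}" "e = ptn s m" using a by (auto simp: Mx_def)
  obtain m' where m': "m' \<in> {1..n}" "e' = ptn s m'" using a by (auto simp: Mx_def)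
  have "TT n s j (ray n (ptn s m)) = TT n s j (ray n (ptn s m'))" for j using a m m' by simp
  then have T: "(if j < m then 1 else 0 :: real) = (if j < m' then 1 else 0)" for j
    using m m' by (simp add: TT_ray_all)
  have "m = m'"
  proof (rule ccontr)
    assume "m \<noteq> m'"
    then consider "m < m'" | "m' < m" by linarith
    then show False
    proof cases
      case 1 then show False using T[of m] by simp
    next
      case 2 then show False using T[of m'] by simp
    qed
  qed
  then show "e = e'" using m m' by simp
qed

lemma TT_zero: "TT n s j (\<lambda>i. 0) = 0"
  by (simp add: TT_def)

lemma indep_rays:
  assumes E: "E \<subseteq> Mx n s"
  shows "lin_indep (ray n ` E)"
  unfolding lin_indep_def
proof (intro allI impI ballI)
  fix u v
  assume h: "\<forall>i. (\<Sum>v\<in>ray n ` E. u v * v i) = 0" and v: "v \<in> ray n ` E"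
  define J where "J = {m\<in>{1..n}. ptn s m \<in> E}"
  have EJ: "E = ptn s ` J" using ptn_of_Mx[OF E] by (simp add: J_def)
  have J: "J \<subseteq> {1..n}" by (auto simp: J_def)
  define c where "c e = u (ray n e)" for e
  have z: "cmb n E c = (\<lambda>i. 0)"
  proof
    fix i
    have "cmb n E c i = (\<Sum>v\<in>ray n ` E. u v * v i)"
      unfolding cmb_def c_def by (simp add: sum.reindex[OF inj_ray_Mx[OF E]])
    then show "cmb n E c i = 0" using h by simp
  qed
  obtain e where e: "e \<in> E" "v = ray n e" using v by blast
  obtain m where m: "m \<in> J" "e = ptn s m" using e EJ by blast
  have m1: "1 \<le> m" "m \<le> n" using m J by auto
  have A1: "AA c s J (m - 1) = 0"
    using TT_cmb_ptn[OF J, of "m - 1" s c] z EJ m1 by (simp add: TT_zero)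
  have A2: "AA c s J m = 0"
    using TT_cmb_ptn[OF J, of m s c] z EJ m1 by (simp add: TT_zero)
  have "AA c s J (m - 1) = AA c s J (Suc (m - 1)) + (if Suc (m - 1) \<in> J then c (ptn s (Suc (m - 1))) else 0)"
    using AA_step[OF J, of "m - 1" c s] m1 by simp
  then have "c (ptn s m) = 0" using A1 A2 m m1 by simp
  then show "u v = 0" using e m by (simp add: c_def)
qed

lemma span_dim_kone:
  assumes E: "E \<subseteq> Mx n s"
  shows "span_dim (kone n E) = card E"
proof -
  have fin: "finite E" using E finite_Mx finite_subset by blast
  let ?S = "{card B | B. finite B \<and> B \<subseteq> kone n E \<and> lin_indep B}"
  have mem: "card E \<in> ?S"
  proof -
    have "card (ray n ` E) = card E" using card_image[OF inj_ray_Mx[OF E]] .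
    moreover have "ray n ` E \<subseteq> kone n E" using ray_kone[OF fin] by blast
    moreover have "lin_indep (ray n ` E)" by (rule indep_rays[OF E])
    ultimately show ?thesis using fin by (metis (mono_tags, lifting) finite_imageI mem_Collect_eq)
  qed
  have bound: "x \<le> card E" if "x \<in> ?S" for x
  proof -
    obtain B where B: "x = card B" "finite B" "B \<subseteq> kone n E" "lin_indep B" using \<open>x \<in> ?S\<close> by blast
    have ind: "\<not> fv.dependent B" using lin_indep_iff[OF B(2)] B(4) by simp
    have "B \<subseteq> fv.span (ray n ` E)"
    proof
      fix b assume "b \<in> B"
      then obtain c where "b = cmb n E c" using B(3) unfolding kone_def by blast
      then show "b \<in> fv.span (ray n ` E)" using cmb_span[OF fin] by simp
    qed
    then have "card B \<le> card (ray n ` E)" using fv.independent_span_bound[OF finite_imageI[OF fin] ind] by simp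
    also have "\<dots> \<le> card E" by (rule card_image_le[OF fin])
    finally show ?thesis using B(1) by simp
  qed
  have finS: "finite ?S"
  proof (rule finite_subset)
    show "?S \<subseteq> {..card E}" using bound by auto
  qed simp
  show ?thesis unfolding span_dim_def
    by (rule Max_eqI[OF finS]) (use bound mem in auto)
qed

lemma kone_sub_aux:
  assumes E: "E \<subseteq> Mx n s" and E': "E' \<subseteq> Mx n s'" and sub: "kone n E \<subseteq> kone n E'"
  shows "E \<subseteq> E'"
proof -
  have finE': "finite E'" using E' finite_Mx finite_subset by blast
  have "cmb n E (\<lambda>_. 1) \<in> kone n E" by (rule kone_I) simp
  then have "cmb n E (\<lambda>_. 1) \<in> kone n E'" using sub by blast
  then obtain c' where c': "cmb n E (\<lambda>_. 1) = cmb n E' c'" "\<forall>e\<in>E'. 0 \<le> c' e" unfolding kone_def by blast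
  define E'' where "E'' = {e\<in>E'. c' e \<noteq> 0}"
  have x: "cmb n E (\<lambda>_. 1) = cmb n E'' c'" using c'(1) cmb_pos_part[OF finE'] by (simp add: E''_def)
  have pos: "\<forall>e\<in>E''. 0 < c' e" using c'(2) by (auto simp: E''_def order_le_less)
  have ch: "chn n E''" by (rule chn_sub_Mx[of _ n s']) (use E' in \<open>auto simp: E''_def\<close>)
  have "E = E''" using U_unique[OF chn_sub_Mx[OF E] ch _ pos x] by simp
  then show ?thesis by (auto simp: E''_def)
qed

lemma kone_inj:
  assumes "E \<subseteq> Mx n s" "E' \<subseteq> Mx n s'" "kone n E = kone n E'"
  shows "E = E'"
  using kone_sub_aux[OF assms(1,2)] kone_sub_aux[OF assms(2,1)] assms(3) by blast

definition SS :: "nat \<Rightarrow> nat \<Rightarrow> (nat \<times> nat) set set" where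
  "SS n k = {E. (\<exists>s. E \<subseteq> Mx n s) \<and> card E = k}"

lemma num_kfaces_SS: "num_kfaces n k = card (SS n k)"
proof -
  have eq: "{F \<in> faces n. span_dim F = k} = kone n ` SS n k"
  proof (intro set_eqI iffI)
    fix F assume "F \<in> {F \<in> faces n. span_dim F = k}"
    then obtain E s where F: "F = kone n E" "E \<subseteq> Mx n s" "span_dim F = k" unfolding faces_eq by blast
    then have "card E = k" using span_dim_kone by simp
    then show "F \<in> kone n ` SS n k" using F unfolding SS_def by blast
  next
    fix F assume "F \<in> kone n ` SS n k"
    then obtain E s where F: "F = kone n E" "E \<subseteq> Mx n s" "card E = k" unfolding SS_def by blast
    then have "span_dim F = k" using span_dim_kone by simp
    moreover have "F \<in> faces n" unfolding faces_eq using F by blast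
    ultimately show "F \<in> {F \<in> faces n. span_dim F = k}" by simp
  qed
  have inj: "inj_on (kone n) (SS n k)"
  proof (rule inj_onI)
    fix E E' assume a: "E \<in> SS n k" "E' \<in> SS n k" "kone n E = kone n E'"
    then obtain s s' where "E \<subseteq> Mx n s" "E' \<subseteq> Mx n s'" unfolding SS_def by blast
    then show "E = E'" using kone_inj a(3) by blast
  qed
  show ?thesis unfolding num_kfaces_def eq by (rule card_image[OF inj])
qed



lemma ptn_add: "ptn s (a + m) = (fst (ptn s a) + fst (ptn (\<lambda>j. s (j + a)) m), snd (ptn s a) + snd (ptn (\<lambda>j. s (j + a)) m))"
  by (induction m) (auto simp: add.commute)

definition shf :: "nat \<Rightarrow> nat \<Rightarrow> nat \<times> nat \<Rightarrow> nat \<times> nat" where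
  "shf a b e = (fst e + a, snd e + b)"

lemma inj_shf: "inj (shf a b)"
  by (rule injI) (auto simp: shf_def prod_eq_iff)

definition Phi :: "nat \<Rightarrow> nat \<Rightarrow> (nat \<times> nat) set \<Rightarrow> (nat \<times> nat) set" where
  "Phi l p E' = insert (p, l - p) (shf p (l - p) ` E')"

lemma finite_SS: "finite (SS n k)"
proof (rule finite_subset)
  show "SS n k \<subseteq> Pow (Tn n)" unfolding SS_def using Mx_Tn by blast
  show "finite (Pow (Tn n))" using finite_Tn by simp
qed

lemma SS_fin_el: "E \<in> SS n k \<Longrightarrow> finite E"
  unfolding SS_def using finite_Mx finite_subset by blast

lemma SS_sum:
  assumes "E \<in> SS n k" "e \<in> E"
  shows "1 \<le> fst e + snd e \<and> fst e + snd e \<le> n"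
proof -
  obtain s where "E \<subseteq> Mx n s" using assms(1) unfolding SS_def by blast
  then have "e \<in> Tn n" using Mx_Tn assms(2) by blast
  then show ?thesis by (simp add: Tn_def)
qed

lemma SS_0: "SS n 0 = {{}}"
proof (rule equalityI)
  show "SS n 0 \<subseteq> {{}}"
  proof (rule subsetI)
    fix E assume E: "E \<in> SS n 0"
    have "finite E" using SS_fin_el[OF E] .
    moreover have "card E = 0" using E unfolding SS_def by blast
    ultimately show "E \<in> {{}}" by simp
  qed
  have "{} \<in> SS n 0" unfolding SS_def by simp
  then show "{{}} \<subseteq> SS n 0" by simp
qed

lemma SS_big: "n < k \<Longrightarrow> SS n k = {}"
proof -
  assume a: "n < k"
  have "card E \<le> n" if "E \<subseteq> Mx n s" for E s
    using card_mono[OF finite_Mx that] card_Mx by simp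
  then have "card E \<noteq> k" if "\<exists>s. E \<subseteq> Mx n s" for E using a that by (metis not_le)
  then show ?thesis unfolding SS_def by blast
qed

lemma shf_notin:
  assumes E: "E \<in> SS m k"
  shows "(p, q) \<notin> shf p q ` E"
proof
  assume "(p, q) \<in> shf p q ` E"
  then obtain e where e: "e \<in> E" "(p, q) = shf p q e" by blast
  then have "fst e + snd e = 0" by (simp add: shf_def prod_eq_iff)
  with SS_sum[OF E e(1)] show False by simp
qed

lemma Phi_sums:
  assumes "E' \<in> SS m k" "p \<le> l" "1 \<le> l"
  shows "\<forall>e\<in>Phi l p E'. l \<le> fst e + snd e" and "\<forall>e\<in>Phi l p E'. fst e + snd e = l \<longrightarrow> e = (p, l - p)"
  using SS_sum[OF assms(1)] assms(2,3) by (auto simp: Phi_def shf_def)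

lemma Phi_inj:
  assumes E1: "E1 \<in> SS (n - l1) k" and E2: "E2 \<in> SS (n - l2) k" and pl: "p1 \<le> l1" "1 \<le> l1" "p2 \<le> l2" "1 \<le> l2"
    and eq: "Phi l1 p1 E1 = Phi l2 p2 E2"
  shows "l1 = l2 \<and> p1 = p2 \<and> E1 = E2"
proof -
  note s1 = Phi_sums[OF E1 pl(1,2)] and s2 = Phi_sums[OF E2 pl(3,4)]
  have "(p1, l1 - p1) \<in> Phi l1 p1 E1" by (simp add: Phi_def)
  then have m1: "(p1, l1 - p1) \<in> Phi l2 p2 E2" using eq by simp
  have "(p2, l2 - p2) \<in> Phi l2 p2 E2" by (simp add: Phi_def)
  then have m2: "(p2, l2 - p2) \<in> Phi l1 p1 E1" using eq by simp
  have "l2 \<le> l1" using s2(1) m1 pl by auto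
  moreover have "l1 \<le> l2" using s1(1) m2 pl by auto
  ultimately have l: "l1 = l2" by simp
  then have "(p1, l1 - p1) = (p2, l2 - p2)" using s2(2) m1 pl by auto
  then have p: "p1 = p2" by simp
  have n1: "(p1, l1 - p1) \<notin> shf p1 (l1 - p1) ` E1" by (rule shf_notin[OF E1])
  have n2: "(p2, l2 - p2) \<notin> shf p2 (l2 - p2) ` E2" by (rule shf_notin[OF E2])
  have "shf p1 (l1 - p1) ` E1 = shf p1 (l1 - p1) ` E2"
    using eq n1 n2 l p unfolding Phi_def by (metis insert_ident)
  then have "E1 = E2" using inj_shf by (simp add: inj_image_eq_iff)
  then show ?thesis using l p by simp
qed

lemma ptn_pre: "j \<le> l \<Longrightarrow> ptn (\<lambda>j. if j < p then True else if j < l then False else s' (j - l)) j = (min j p, j - min j p)"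
proof (induction j)
  case 0 then show ?case by simp
next
  case (Suc j)
  then show ?case by (auto simp: min_def)
qed

lemma Phi_in:
  assumes E': "E' \<in> SS (n - l) k" and l: "l \<in> {1..n}" and p: "p \<le> l"
  shows "Phi l p E' \<in> SS n (Suc k)"
proof -
  obtain s' where s': "E' \<subseteq> Mx (n - l) s'" "card E' = k" using E' unfolding SS_def by blast
  define s where "s j = (if j < p then True else if j < l then False else s' (j - l))" for j
  have pl: "ptn s l = (p, l - p)" using ptn_pre[of l l p s'] p by (simp add: s_def[abs_def] min_def)
  have sh: "(\<lambda>j. s (j + l)) = s'" using p by (auto simp: s_def fun_eq_iff)
  have pm: "ptn s (l + m) = shf p (l - p) (ptn s' m)" for m
    using ptn_add[of s l m] pl sh by (simp add: shf_def add.commute)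
  have sub: "Phi l p E' \<subseteq> Mx n s"
  proof
    fix e assume "e \<in> Phi l p E'"
    then consider "e = (p, l - p)" | "e \<in> shf p (l - p) ` E'" by (auto simp: Phi_def)
    then show "e \<in> Mx n s"
    proof cases
      case 1 then show ?thesis using pl l unfolding Mx_def by (metis imageI)
    next
      case 2
      then obtain e' where e': "e' \<in> E'" "e = shf p (l - p) e'" by blast
      then obtain m where m: "m \<in> {1..n - l}" "e' = ptn s' m" using s' by (auto simp: Mx_def)
      then have "e = ptn s (l + m)" using e' pm by simp
      moreover have "l + m \<in> {1..n}" using m l by auto
      ultimately show ?thesis unfolding Mx_def by blast
    qed
  qed
  have finE': "finite E'" using E' SS_fin_el by blast
  have nin: "(p, l - p) \<notin> shf p (l - p) ` E'" by (rule shf_notin[OF E'])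
  have "card (Phi l p E') = Suc k"
    unfolding Phi_def using nin finE' s'(2) card_image[OF inj_on_subset[OF inj_shf subset_UNIV]] by simp
  then show ?thesis unfolding SS_def using sub by blast
qed

lemma Phi_surj:
  assumes E: "E \<in> SS n (Suc k)"
  shows "\<exists>l p E'. l \<in> {1..n} \<and> p \<le> l \<and> E' \<in> SS (n - l) k \<and> E = Phi l p E'"
proof -
  obtain s where s: "E \<subseteq> Mx n s" "card E = Suc k" using E unfolding SS_def by blast
  define J where "J = {m\<in>{1..n}. ptn s m \<in> E}"
  have EJ: "E = ptn s ` J" using ptn_of_Mx[OF s(1)] by (simp add: J_def)
  have Jne: "J \<noteq> {}" using EJ s(2) by auto
  have finJ: "finite J" by (simp add: J_def)
  define l where "l = Min J"
  have lJ: "l \<in> J" using finJ Jne l_def by simp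
  have lmin: "\<forall>m\<in>J. l \<le> m" using finJ l_def by simp
  have l1: "l \<in> {1..n}" using lJ by (simp add: J_def)
  define p where "p = fst (ptn s l)"
  have pl: "ptn s l = (p, l - p)" using ptn_sum[of s l] by (simp add: p_def prod_eq_iff)
  have ple: "p \<le> l" using ptn_sum[of s l] by (simp add: p_def)
  define s' where "s' j = s (j + l)" for j
  define E' where "E' = (\<lambda>m. ptn s' (m - l)) ` (J - {l})"
  have pm: "ptn s m = shf p (l - p) (ptn s' (m - l))" if "l \<le> m" for m
    using ptn_add[of s l "m - l"] pl that by (simp add: shf_def s'_def[abs_def])
  have sub': "E' \<subseteq> Mx (n - l) s'"
  proof
    fix e assume "e \<in> E'"
    then obtain m where m: "m \<in> J - {l}" "e = ptn s' (m - l)" by (auto simp: E'_def)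
    then have "l < m" "m \<le> n" using lmin by (auto simp: J_def order_le_less)
    then have "m - l \<in> {1..n - l}" by auto
    then show "e \<in> Mx (n - l) s'" using m unfolding Mx_def by blast
  qed
  have EPhi: "E = Phi l p E'"
  proof -
    have "E = insert (ptn s l) (ptn s ` (J - {l}))" using EJ lJ by blast
    also have "ptn s ` (J - {l}) = shf p (l - p) ` E'"
    proof -
      have "ptn s ` (J - {l}) = (\<lambda>m. shf p (l - p) (ptn s' (m - l))) ` (J - {l})"
        using pm lmin by (intro image_cong refl) auto
      then show ?thesis unfolding E'_def by (simp add: image_image)
    qed
    finally show ?thesis using pl by (simp add: Phi_def)
  qed
  have finE': "finite E'" unfolding E'_def using finJ by simp
  have nin: "(p, l - p) \<notin> shf p (l - p) ` E'"
  proof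
    assume "(p, l - p) \<in> shf p (l - p) ` E'"
    then obtain e' where "e' \<in> E'" "(p, l - p) = shf p (l - p) e'" by blast
    moreover then have "1 \<le> fst e' + snd e'" using sub' Mx_Tn by (auto simp: Tn_def)
    ultimately show False by (auto simp: shf_def)
  qed
  have "card E = Suc (card E')"
    unfolding EPhi Phi_def using nin finE' card_image[OF inj_on_subset[OF inj_shf subset_UNIV]] by simp
  then have "card E' = k" using s(2) by simp
  then have "E' \<in> SS (n - l) k" unfolding SS_def using sub' by blast
  then show ?thesis using l1 ple EPhi by blast
qed

lemma SS_Suc_card: "card (SS n (Suc k)) = (\<Sum>l\<in>{1..n}. (l + 1) * card (SS (n - l) k))"
proof -
  define I where "I = Sigma {1..n} (\<lambda>l. {0..l})"
  define A where "A i = (\<lambda>E'. Phi (fst i) (snd i) E') ` SS (n - fst i) k" for i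
  have eq: "SS n (Suc k) = (\<Union>i\<in>I. A i)"
  proof
    show "SS n (Suc k) \<subseteq> (\<Union>i\<in>I. A i)"
    proof
      fix E assume "E \<in> SS n (Suc k)"
      then obtain l p E' where "l \<in> {1..n}" "p \<le> l" "E' \<in> SS (n - l) k" "E = Phi l p E'"
        using Phi_surj by blast
      then show "E \<in> (\<Union>i\<in>I. A i)" unfolding I_def A_def
        by (intro UN_I[of "(l, p)"]) auto
    qed
    show "(\<Union>i\<in>I. A i) \<subseteq> SS n (Suc k)"
      unfolding I_def A_def using Phi_in by auto
  qed
  have finI: "finite I" by (simp add: I_def)
  have finA: "\<forall>i\<in>I. finite (A i)" using finite_SS by (simp add: A_def)
  have disj: "\<forall>i\<in>I. \<forall>j\<in>I. i \<noteq> j \<longrightarrow> A i \<inter> A j = {}"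
  proof (intro ballI impI)
    fix i j assume ij: "i \<in> I" "j \<in> I" "i \<noteq> j"
    show "A i \<inter> A j = {}"
    proof (rule ccontr)
      assume "A i \<inter> A j \<noteq> {}"
      then obtain E1 E2 where E: "E1 \<in> SS (n - fst i) k" "E2 \<in> SS (n - fst j) k"
        "Phi (fst i) (snd i) E1 = Phi (fst j) (snd j) E2" unfolding A_def by blast
      have "fst i = fst j \<and> snd i = snd j" using Phi_inj[OF E(1,2) _ _ _ _ E(3)] ij by (auto simp: I_def)
      then show False using ij by (simp add: prod_eq_iff)
    qed
  qed
  have cardA: "card (A i) = card (SS (n - fst i) k)" if i: "i \<in> I" for i
  proof -
    have "inj_on (Phi (fst i) (snd i)) (SS (n - fst i) k)"
    proof (rule inj_onI)
      fix x y assume xy: "x \<in> SS (n - fst i) k" "y \<in> SS (n - fst i) k" "Phi (fst i) (snd i) x = Phi (fst i) (snd i) y"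
      have "snd i \<le> fst i" "1 \<le> fst i" using i by (auto simp: I_def)
      then show "x = y" using Phi_inj[OF xy(1,2) _ _ _ _ xy(3)] by blast
    qed
    then show ?thesis unfolding A_def by (rule card_image)
  qed
  have "card (SS n (Suc k)) = (\<Sum>i\<in>I. card (A i))"
    unfolding eq by (rule card_UN_disjoint[OF finI finA disj])
  also have "\<dots> = (\<Sum>i\<in>I. card (SS (n - fst i) k))" using cardA by simp
  also have "\<dots> = (\<Sum>(l, p)\<in>I. card (SS (n - l) k))" by (simp add: split_beta)
  also have "\<dots> = (\<Sum>l\<in>{1..n}. \<Sum>p\<in>{0..l}. card (SS (n - l) k))"
    unfolding I_def by (rule sum.Sigma[symmetric]) auto
  also have "\<dots> = (\<Sum>l\<in>{1..n}. (l + 1) * card (SS (n - l) k))" by simp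
  finally show ?thesis .
qed

lemma g_eq:
  assumes "0 \<le> n" "0 \<le> k"
  shows "g n k = int (card (SS (nat n) (nat k)))"
proof (cases "k > n")
  case True
  then have "nat n < nat k" using assms by simp
  then have "SS (nat n) (nat k) = {}" by (rule SS_big)
  then show ?thesis using True by (simp add: g_def)
next
  case False
  then show ?thesis using assms by (simp add: g_def num_kfaces_SS)
qed

lemma g_negk: "k < 0 \<Longrightarrow> g n k = 0"
  by (simp add: g_def)

theorem proposition4p1:
  fixes n k :: int
  assumes "n \<ge> 0"
  shows "g n k = (if k = 0 then 1 else 0) + (\<Sum>l = 1..n - k + 1. (l + 1) * g (n - l) (k - 1))"
proof (cases "k < 0")
  case True
  then show ?thesis by (simp add: g_negk)
next
  case kn: False
  show ?thesis
  proof (cases "k = 0")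
    case True
    have "g n k = int (card (SS (nat n) 0))" using g_eq[OF assms] True by simp
    also have "\<dots> = 1" by (simp add: SS_0)
    finally show ?thesis using True by (simp add: g_negk)
  next
    case False
    define N where "N = nat n"
    define K where "K = nat (k - 1)"
    have nN: "n = int N" using assms N_def by simp
    have kK: "k = int K + 1" using kn False K_def by simp
    have k0: "0 \<le> k" using kn by simp
    have nk: "nat k = Suc K" using kK by simp
    have "g n k = int (card (SS (nat n) (nat k)))" using g_eq[OF assms k0] .
    also have "\<dots> = int (card (SS N (Suc K)))" unfolding nk N_def ..
    finally have "g n k = int (card (SS N (Suc K)))" .
    also have "\<dots> = int (\<Sum>l\<in>{1..N}. (l + 1) * card (SS (N - l) K))" by (simp add: SS_Suc_card)
    also have "(\<Sum>l\<in>{1..N}. (l + 1) * card (SS (N - l) K)) = (\<Sum>l\<in>{1..N - K}. (l + 1) * card (SS (N - l) K))"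
    proof (rule sum.mono_neutral_right)
      show "finite {1..N}" by simp
      show "{1..N - K} \<subseteq> {1..N}" by auto
      show "\<forall>i\<in>{1..N} - {1..N - K}. (i + 1) * card (SS (N - i) K) = 0"
      proof
        fix i assume "i \<in> {1..N} - {1..N - K}"
        then have "N - i < K" by auto
        then show "(i + 1) * card (SS (N - i) K) = 0" using SS_big by simp
      qed
    qed
    also have "int (\<Sum>l\<in>{1..N - K}. (l + 1) * card (SS (N - l) K)) = (\<Sum>l\<in>{1..N - K}. (int l + 1) * g (n - int l) (k - 1))"
      unfolding of_nat_sum
    proof (rule sum.cong[OF refl])
      fix l assume l: "l \<in> {1..N - K}"
      have "g (n - int l) (k - 1) = int (card (SS (nat (n - int l)) (nat (k - 1))))"
        using l nN kK by (intro g_eq) auto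
      also have "nat (n - int l) = N - l" using nN l by auto
      also have "nat (k - 1) = K" using kK by simp
      finally show "int ((l + 1) * card (SS (N - l) K)) = (int l + 1) * g (n - int l) (k - 1)" by (simp add: algebra_simps)
    qed
    also have "\<dots> = (\<Sum>l\<in>int ` {1..N - K}. (l + 1) * g (n - l) (k - 1))"
      by (simp add: sum.reindex)
    also have "int ` {1..N - K} = {1..n - k + 1}"
    proof (cases "K \<le> N")
      case True
      then have "n - k + 1 = int (N - K)" using nN kK by simp
      then show ?thesis by (simp add: image_int_atLeastAtMost)
    next
      case False
      then have "n - k + 1 < 1" using nN kK by simp
      moreover have "N - K = 0" using False by simp
      ultimately show ?thesis by simp
    qed
    finally show ?thesis using False by simp
  qed
qed


end
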